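(* Under the setting and additional assumptions below, the local copies generated by SONATA are asymptotically consensual: for all $i=1,\dots,I$, $\lim_{k\to\infty}\|\mathbf{x}_{(i)}^k-\bar{\mathbf{x}}_\phi^k\|=0$; moreover $\sum_{k=0}^\infty\gamma^k\|\mathbf{x}_{(i)}^k-\bar{\mathbf{x}}_\phi^k\|<\infty$ and $\sum_{k=0}^\infty\|\mathbf{x}_{(i)}^k-\bar{\mathbf{x}}_\phi^k\|^2<\infty$.
   Context: Problem: minimize $V(\mathbf{x})\triangleq F(\mathbf{x})+G(\mathbf{x})$, $F=\sum_{i=1}^If_i$, over $\mathbf{x}\in X$, where $X\subseteq\mathbb{R}^m$ is nonempty closed convex; each $f_i:O\to\mathbb{R}$ is $C^1$ on an open set $O\supseteq X$ with $\nabla f_i$ $L_i$-Lipschitz on $X$; $G:O\to\mathbb{R}$ is convex; $V$ is bounded below on $X$. Additional assumptions: $\|\nabla F(\mathbf{x})\|\le L_F<\infty$ and all subgradients of $G$ at $\mathbf{x}$ have norm $\le L_G<\infty$, for all $\mathbf{x}\in X$; step-sizes $\gamma^k\in(0,1]$ with $\sum_k\gamma^k=\infty$, $\sum_k(\gamma^k)^2<\infty$. Network: digraphs $G^k=(\{1,\dots,I\},E^k)$, $(j,i)\in E^k$ meaning $j$ can send to $i$, $B$-strongly connected ($\bigcup_{t=k}^{k+B-1}E^t$ strongly connected for every $k$). $\mathbf{A}^k=(a_{ij}^k)$: $a_{ij}^k=0$ if $j\ne i$ and $(j,i)\notin E^k$, $a_{ij}^k\ge\kappa$ if $(j,i)\in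 E^k$, $a_{ii}^k\ge\kappa$ ($\kappa>0$), nonnegative with $\mathbf{1}^T\mathbf{A}^k=\mathbf{1}^T$. Assumption III.14 on $\widetilde f_i:O\times O\to\mathbb{R}$: $\widetilde f_i(\cdot|\mathbf{x})$ is $\tau_i$-strongly convex on $X$ for all $\mathbf{x}\in X$; $C^1$ on $O$ with $\nabla\widetilde f_i(\mathbf{x}|\mathbf{x})=\nabla f_i(\mathbf{x})$; $\nabla\widetilde f_i(\mathbf{x}|\cdot)$ is $\widetilde L_i$-Lipschitz on $X$. SONATA: initialize $\mathbf{x}_{(i)}^0\in X$, $\phi_{(i)}^0=1$, $\mathbf{y}_{(i)}^0=\nabla f_i(\mathbf{x}_{(i)}^0)$; at iteration $k$, $\widetilde{\mathbf{x}}_i^k=\operatorname{argmin}_{\mathbf{x}\in X}\{\widetilde f_i(\mathbf{x}|\mathbf{x}_{(i)}^k)+(I\mathbf{y}_{(i)}^k-\nabla f_i(\mathbf{x}_{(i)}^k))^T(\mathbf{x}-\mathbf{x}_{(i)}^k)+G(\mathbf{x})\}$, $\mathbf{x}_{(i)}^{k+1/2}=\mathbf{x}_{(i)}^k+\gamma^k(\widetilde{\mathbf{x}}_i^k-\mathbf{x}_{(i)}^k)$, $\phi_{(i)}^{k+1}=\sum_ja_{ij}^k\phi_{(j)}^k$, $\mathbf{x}_{(i)}^{k+1}=\frac{1}{\phi_{(i)}^{k+1}}\sum_ja_{ij}^k\phi_{(j)}^k\mathbf{x}_{(j)}^{k+1/2}$, $\mathbf{y}_{(i)}^{k+1}=\frac{1}{\phi_{(i)}^{k+1}}\sum_ja_{ij}^k\phi_{(j)}^k\mathbf{y}_{(j)}^k+\frac{1}{\phi_{(i)}^{k+1}}(\nabla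 f_i(\mathbf{x}_{(i)}^{k+1})-\nabla f_i(\mathbf{x}_{(i)}^k))$. $\bar{\mathbf{x}}_\phi^k\triangleq\frac1I\sum_j\phi_{(j)}^k\mathbf{x}_{(j)}^k$. *)

theory Defs
  imports "HOL-Analysis.Analysis"
begin

definition strongly_convex_on :: "real \<Rightarrow> 'a::real_inner set \<Rightarrow> ('a \<Rightarrow> real) \<Rightarrow> bool" where
  "strongly_convex_on tau S f \<longleftrightarrow>
     (\<forall>x\<in>S. \<forall>y\<in>S. \<forall>t::real. 0 \<le> t \<and> t \<le> 1 \<longrightarrow>
        f (t *\<^sub>R x + (1 - t) *\<^sub>R y) \<le> t * f x + (1 - t) * f y - tau / 2 * t * (1 - t) * (norm (x - y))\<^sup>2)"

definition is_subgradient :: "'a set \<Rightarrow> ('a::real_inner \<Rightarrow> real) \<Rightarrow> 'a \<Rightarrow> 'a \<Rightarrow> bool" where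
  "is_subgradient U G x g \<longleftrightarrow> (\<forall>z\<in>U. G z \<ge> G x + inner g (z - x))"

definition strongly_connected_on :: "nat \<Rightarrow> (nat \<times> nat) set \<Rightarrow> bool" where
  "strongly_connected_on n E \<longleftrightarrow> (\<forall>i<n. \<forall>j<n. (i, j) \<in> (E \<inter> ({..<n} \<times> {..<n}))\<^sup>*)"

end

theory Submission
  imports Defs
begin

lemma geom_partial_le:
  fixes \<rho> :: real assumes "0 \<le> \<rho>" "\<rho> < 1"
  shows "(\<Sum>j<n. \<rho>^j) \<le> 1/(1-\<rho>)"
proof -
  have "(\<Sum>j<n. \<rho>^j) = (1 - \<rho>^n)/(1-\<rho>)" using assms by (simp add: sum_gp_strict)
  also have "\<dots> \<le> 1/(1-\<rho>)" using assms by (simp add: divide_right_mono)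
  finally show ?thesis .
qed

lemma geom_shift_le:
  fixes \<rho> :: real assumes "0 \<le> \<rho>" "\<rho> < 1"
  shows "(\<Sum>k\<in>{Suc t..<n}. \<rho>^(k - Suc t)) \<le> 1/(1-\<rho>)"
proof -
  have "(\<Sum>k\<in>{Suc t..<n}. \<rho>^(k - Suc t)) = (\<Sum>j<n - Suc t. \<rho>^j)"
  proof (cases "Suc t \<le> n")
    case True
    then show ?thesis
      using sum.shift_bounds_nat_ivl[of "\<lambda>k. \<rho>^(k - Suc t)" 0 "Suc t" "n - Suc t"]
      by (simp add: lessThan_atLeast0 add.commute)
  qed simp
  also have "\<dots> \<le> 1/(1-\<rho>)" by (rule geom_partial_le[OF assms])
  finally show ?thesis .
qed

lemma geom_conv_le:
  fixes \<rho> :: real assumes "0 \<le> \<rho>" "\<rho> < 1"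
  shows "(\<Sum>t<k. \<rho>^(k - 1 - t)) \<le> 1/(1-\<rho>)"
proof -
  have "(\<Sum>t<k. \<rho>^(k - 1 - t)) = (\<Sum>j<k. \<rho>^j)"
    by (rule sum.reindex_bij_witness[where i="\<lambda>j. k - 1 - j" and j="\<lambda>t. k - 1 - t"]) auto
  then show ?thesis using geom_partial_le[OF assms] by simp
qed

lemma conv_summable:
  fixes \<rho> :: real and c :: "nat \<Rightarrow> real"
  assumes "0 \<le> \<rho>" "\<rho> < 1" "\<And>t. 0 \<le> c t" "summable c"
  shows "summable (\<lambda>k. \<Sum>t<k. \<rho>^(k - 1 - t) * c t)"
proof (rule summableI_nonneg_bounded)
  fix k show "0 \<le> (\<Sum>t<k. \<rho>^(k - 1 - t) * c t)"
    using assms by (intro sum_nonneg mult_nonneg_nonneg) auto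
next
  fix n
  have "(\<Sum>k<n. \<Sum>t<k. \<rho>^(k - 1 - t) * c t) \<le> (\<Sum>k\<le>n. \<Sum>t<k. \<rho>^(k - 1 - t) * c t)"
    using assms by (intro sum_mono2) (auto intro!: sum_nonneg mult_nonneg_nonneg)
  also have "\<dots> = (\<Sum>t<n. \<Sum>k\<in>{Suc t..n}. \<rho>^(k - 1 - t) * c t)"
    by (rule sum.nested_swap')
  also have "\<dots> = (\<Sum>t<n. c t * (\<Sum>k\<in>{Suc t..<Suc n}. \<rho>^(k - Suc t)))"
    by (intro sum.cong refl) (auto simp: sum_distrib_left mult.commute atLeastLessThanSuc_atLeastAtMost)
  also have "\<dots> \<le> (\<Sum>t<n. c t * (1/(1-\<rho>)))"
    by (rule sum_mono, rule mult_left_mono, rule geom_shift_le[OF assms(1,2)], rule assms)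
  also have "\<dots> = (\<Sum>t<n. c t) / (1-\<rho>)" by (simp add: sum_divide_distrib)
  also have "\<dots> \<le> suminf c / (1-\<rho>)"
    using assms by (intro divide_right_mono sum_le_suminf) auto
  finally show "(\<Sum>k<n. \<Sum>t<k. \<rho>^(k - 1 - t) * c t) \<le> suminf c / (1-\<rho>)" .
qed

lemma weighted_CS:
  fixes w a :: "nat \<Rightarrow> real"
  assumes "\<And>i. i \<in> A \<Longrightarrow> 0 \<le> w i"
  shows "(\<Sum>i\<in>A. w i * a i)\<^sup>2 \<le> (\<Sum>i\<in>A. w i) * (\<Sum>i\<in>A. w i * (a i)\<^sup>2)"
proof -
  have "(\<Sum>i\<in>A. w i * a i) = (\<Sum>i\<in>A. sqrt (w i) * (sqrt (w i) * a i))"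
    using assms by (intro sum.cong) (auto simp: mult.assoc[symmetric])
  then have "(\<Sum>i\<in>A. w i * a i)\<^sup>2 \<le> (\<Sum>i\<in>A. (sqrt (w i))\<^sup>2) * (\<Sum>i\<in>A. (sqrt (w i) * a i)\<^sup>2)"
    using Cauchy_Schwarz_ineq_sum[of "\<lambda>i. sqrt (w i)" "\<lambda>i. sqrt (w i) * a i" A] by simp
  also have "\<dots> = (\<Sum>i\<in>A. w i) * (\<Sum>i\<in>A. w i * (a i)\<^sup>2)"
    using assms by (simp add: power_mult_distrib)
  finally show ?thesis .
qed

lemma sq_sum_le: "(u+v)^2 \<le> 2*u^2 + 2*(v::real)^2"
proof -
  have "(u+v)^2 = u^2+2*(u * v)+v^2" "(u-v)^2 = u^2 - 2*(u * v) + v^2" by (simp_all add: power2_eq_square algebra_simps)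
  moreover have "0 \<le> (u-v)^2" by simp
  ultimately show ?thesis by linarith
qed

lemma prod_le_sq: "u * v \<le> (u^2 + (v::real)^2)/2"
proof -
  have "(u-v)^2 = u^2 - 2*(u * v) + v^2" by (simp_all add: power2_eq_square algebra_simps)
  moreover have "0 \<le> (u-v)^2" by simp
  ultimately have "2*(u * v) \<le> u^2 + v^2" by linarith
  then show ?thesis by simp
qed

lemma seq_main:
  fixes \<rho> a b :: real and \<gamma> d :: "nat \<Rightarrow> real"
  assumes r0: "0 \<le> \<rho>" and r1: "\<rho> < 1" and a0: "0 \<le> a" and b0: "0 \<le> b"
    and g0: "\<And>k. 0 \<le> \<gamma> k" and gsq: "summable (\<lambda>k. (\<gamma> k)\<^sup>2)"
    and d0: "\<And>k. 0 \<le> d k"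
    and dle: "\<And>k. d k \<le> a * \<rho>^k + b * (\<Sum>t<k. \<rho>^(k - 1 - t) * \<gamma> t)"
  shows "(d \<longlonglongrightarrow> 0) \<and> summable (\<lambda>k. \<gamma> k * d k) \<and> summable (\<lambda>k. (d k)\<^sup>2)"
proof -
  define cv where "cv k = (\<Sum>t<k. \<rho>^(k - 1 - t) * \<gamma> t)" for k
  define cv2 where "cv2 k = (\<Sum>t<k. \<rho>^(k - 1 - t) * (\<gamma> t)\<^sup>2)" for k
  have cv0: "0 \<le> cv k" for k unfolding cv_def using r0 g0 by (intro sum_nonneg mult_nonneg_nonneg) auto
  have cvsq: "(cv k)\<^sup>2 \<le> cv2 k / (1-\<rho>)" for k
  proof -
    have "(cv k)\<^sup>2 \<le> (\<Sum>t<k. \<rho>^(k - 1 - t)) * cv2 k"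
      unfolding cv_def cv2_def using r0 by (intro weighted_CS) auto
    also have "\<dots> \<le> (1/(1-\<rho>)) * cv2 k"
      using geom_conv_le[OF r0 r1, of k] r0 g0
      by (intro mult_right_mono) (auto simp: cv2_def intro!: sum_nonneg)
    finally show ?thesis by simp
  qed
  have s2: "summable cv2" unfolding cv2_def
    by (rule conv_summable[OF r0 r1 _ gsq]) auto
  have sr: "summable (\<lambda>k. (\<rho>^2)^k)" using r0 r1
    by (intro summable_geometric) (simp add: abs_square_less_1)
  have dsq: "(d k)\<^sup>2 \<le> 2*a\<^sup>2 * (\<rho>^2)^k + 2*b\<^sup>2 * (cv2 k / (1-\<rho>))" for k
  proof -
    have "(d k)\<^sup>2 \<le> (a * \<rho>^k + b * cv k)\<^sup>2"
      using dle[of k] d0[of k] a0 b0 cv0[of k] r0 unfolding cv_def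
      by (intro power_mono) auto
    also have "\<dots> \<le> 2*(a * \<rho>^k)\<^sup>2 + 2*(b * cv k)\<^sup>2"
      by (rule sq_sum_le)
    also have "\<dots> \<le> 2*a\<^sup>2 * (\<rho>^2)^k + 2*b\<^sup>2 * (cv2 k / (1-\<rho>))"
    proof -
      have e1: "(a * \<rho>^k)\<^sup>2 = a\<^sup>2 * (\<rho>^2)^k"
        by (simp add: power_mult_distrib power_mult[symmetric] mult.commute)
      have e2: "(b * cv k)\<^sup>2 \<le> b\<^sup>2 * (cv2 k / (1-\<rho>))"
        unfolding power_mult_distrib by (rule mult_left_mono[OF cvsq]) simp
      show ?thesis using e1 e2 by linarith
    qed
    finally show ?thesis .
  qed
  have S: "summable (\<lambda>k. (d k)\<^sup>2)"
    apply (rule summable_comparison_test'[where g="\<lambda>k. 2*a\<^sup>2 * (\<rho>^2)^k + 2*b\<^sup>2 * (cv2 k / (1-\<rho>))"])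
     apply (intro summable_add summable_mult summable_divide sr s2)
    using dsq by simp
  have "(\<lambda>k. (d k)\<^sup>2) \<longlonglongrightarrow> 0" by (rule summable_LIMSEQ_zero[OF S])
  then have "(\<lambda>k. sqrt ((d k)\<^sup>2)) \<longlonglongrightarrow> sqrt 0" by (rule tendsto_real_sqrt)
  then have L: "d \<longlonglongrightarrow> 0" using d0 by simp
  have "summable (\<lambda>k. ((\<gamma> k)\<^sup>2 + (d k)\<^sup>2)/2)" by (intro summable_divide summable_add gsq S)
  then have G: "summable (\<lambda>k. \<gamma> k * d k)"
    apply (rule summable_comparison_test'[where N=0])
    using g0 d0 prod_le_sq by (simp add: abs_mult)
  show ?thesis using L G S by blast
qed


lemma window_bound:
  fixes D \<epsilon> :: "nat \<Rightarrow> real" and q \<rho> :: real and T :: nat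
  assumes T0: "0 < T" and r0: "0 < \<rho>" and r1: "\<rho> \<le> 1" and rq: "\<rho>^T = q"
    and D0: "\<And>k. 0 \<le> D k" and e0: "\<And>k. 0 \<le> \<epsilon> k"
    and H1: "\<And>k. D (Suc k) \<le> D k + 2 * \<epsilon> k"
    and H2: "\<And>k. D (k + T) \<le> q * D k + 2 * (\<Sum>t\<in>{k..<k+T}. \<epsilon> t)"
  shows "D k \<le> (\<rho>^k / q) * D 0 + (2/q) * (\<Sum>t<k. \<rho>^(k - 1 - t) * \<epsilon> t)"
proof (induction k rule: less_induct)
  case (less k)
  have q0: "0 < q" using rq r0 by auto
  show ?case
  proof (cases "k < T")
    case True
    have lin: "D n \<le> D 0 + 2 * (\<Sum>t<n. \<epsilon> t)" for n
    proof (induction n)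
      case (Suc n) then show ?case using H1[of n] by simp
    qed simp
    have "\<rho>^k \<ge> q" using rq power_decreasing[of k T \<rho>] True r0 r1 by simp
    then have a: "1 \<le> \<rho>^k / q" using q0 by simp
    have b: "\<epsilon> t \<le> (\<rho>^(k - 1 - t) / q) * \<epsilon> t" if "t < k" for t
    proof -
      have "k - 1 - t \<le> T" using True by simp
      then have "\<rho>^(k - 1 - t) \<ge> q" using rq power_decreasing[of "k - 1 - t" T \<rho>] r0 r1 by simp
      then have "1 \<le> \<rho>^(k - 1 - t) / q" using q0 by simp
      then show ?thesis using e0[of t] mult_right_mono[of 1 "\<rho>^(k - 1 - t) / q" "\<epsilon> t"] by simp
    qed
    have "D k \<le> D 0 + 2 * (\<Sum>t<k. \<epsilon> t)" by (rule lin)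
    also have "\<dots> \<le> (\<rho>^k / q) * D 0 + 2 * (\<Sum>t<k. (\<rho>^(k - 1 - t) / q) * \<epsilon> t)"
    proof -
      have "D 0 \<le> (\<rho>^k / q) * D 0" using a D0[of 0] mult_right_mono[of 1 "\<rho>^k / q" "D 0"] by simp
      moreover have "(\<Sum>t<k. \<epsilon> t) \<le> (\<Sum>t<k. (\<rho>^(k - 1 - t) / q) * \<epsilon> t)"
        using b by (intro sum_mono) auto
      ultimately show ?thesis by linarith
    qed
    also have "\<dots> = (\<rho>^k / q) * D 0 + (2/q) * (\<Sum>t<k. \<rho>^(k - 1 - t) * \<epsilon> t)"
      by (simp add: sum_distrib_left sum_divide_distrib)
    finally show ?thesis .
  next
    case False
    define m where "m = k - T"
    have km: "k = m + T" using False m_def by simp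
    have mk: "m < k" using km T0 by simp
    have IH: "D m \<le> (\<rho>^m / q) * D 0 + (2/q) * (\<Sum>t<m. \<rho>^(m - 1 - t) * \<epsilon> t)"
      using less mk by blast
    have rk: "\<rho>^k = \<rho>^m * q" using km rq by (simp add: power_add)
    have s1: "q * (\<Sum>t<m. \<rho>^(m - 1 - t) * \<epsilon> t) = (\<Sum>t<m. \<rho>^(k - 1 - t) * \<epsilon> t)"
    proof -
      have "q * (\<Sum>t<m. \<rho>^(m - 1 - t) * \<epsilon> t) = (\<Sum>t<m. \<rho>^(m - 1 - t) * q * \<epsilon> t)"
        by (simp add: sum_distrib_left mult_ac)
      also have "\<dots> = (\<Sum>t<m. \<rho>^(k - 1 - t) * \<epsilon> t)"
      proof (intro sum.cong refl)
        fix t assume "t \<in> {..<m}"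
        then have "k - 1 - t = (m - 1 - t) + T" using km by auto
        then show "\<rho>^(m - 1 - t) * q * \<epsilon> t = \<rho>^(k - 1 - t) * \<epsilon> t" using rq by (simp add: power_add)
      qed
      finally show ?thesis .
    qed
    have s2: "(\<Sum>t\<in>{m..<k}. \<epsilon> t) \<le> (1/q) * (\<Sum>t\<in>{m..<k}. \<rho>^(k - 1 - t) * \<epsilon> t)"
    proof -
      have "(\<Sum>t\<in>{m..<k}. \<epsilon> t) \<le> (\<Sum>t\<in>{m..<k}. (\<rho>^(k - 1 - t) / q) * \<epsilon> t)"
      proof (intro sum_mono)
        fix t assume t: "t \<in> {m..<k}"
        have "k - 1 - t \<le> T" using t km by auto
        then have "\<rho>^(k - 1 - t) \<ge> q" using rq power_decreasing[of "k - 1 - t" T \<rho>] r0 r1 by simp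
        then have "1 \<le> \<rho>^(k - 1 - t) / q" using q0 by simp
        then show "\<epsilon> t \<le> (\<rho>^(k - 1 - t) / q) * \<epsilon> t" using e0[of t] mult_right_mono[of 1 "\<rho>^(k - 1 - t) / q" "\<epsilon> t"] by simp
      qed
      also have "\<dots> = (1/q) * (\<Sum>t\<in>{m..<k}. \<rho>^(k - 1 - t) * \<epsilon> t)"
        by (simp add: sum_distrib_left)
      finally show ?thesis .
    qed
    have split: "(\<Sum>t<k. \<rho>^(k - 1 - t) * \<epsilon> t) = (\<Sum>t<m. \<rho>^(k - 1 - t) * \<epsilon> t) + (\<Sum>t\<in>{m..<k}. \<rho>^(k - 1 - t) * \<epsilon> t)"
      using mk sum.atLeastLessThan_concat[of 0 m k "\<lambda>t. \<rho>^(k - 1 - t) * \<epsilon> t"] by (simp add: lessThan_atLeast0)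
    have "D k \<le> q * D m + 2 * (\<Sum>t\<in>{m..<k}. \<epsilon> t)" using H2[of m] km by simp
    also have "\<dots> \<le> q * ((\<rho>^m / q) * D 0 + (2/q) * (\<Sum>t<m. \<rho>^(m - 1 - t) * \<epsilon> t))
                   + 2 * ((1/q) * (\<Sum>t\<in>{m..<k}. \<rho>^(k - 1 - t) * \<epsilon> t))"
      using IH s2 q0 by (intro add_mono mult_left_mono) auto
    also have "\<dots> = (\<rho>^k / q) * D 0 + (2/q) * (\<Sum>t<k. \<rho>^(k - 1 - t) * \<epsilon> t)"
      using q0 unfolding split rk s1[symmetric] by (simp add: field_simps)
    finally show ?thesis .
  qed
qed


definition diam :: "nat \<Rightarrow> (nat \<Rightarrow> 'b::real_normed_vector) \<Rightarrow> real" where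
  "diam n r = Max ((\<lambda>p. norm (r (fst p) - r (snd p))) ` ({..<n} \<times> {..<n}))"

lemma diam_ge: "i < n \<Longrightarrow> j < n \<Longrightarrow> norm (r i - r j) \<le> diam n r"
  unfolding diam_def by (rule Max_ge) (auto intro!: image_eqI[where x="(i,j)"])

lemma diam_le: "0 < n \<Longrightarrow> (\<And>i j. i < n \<Longrightarrow> j < n \<Longrightarrow> norm (r i - r j) \<le> c) \<Longrightarrow> diam n r \<le> c"
  unfolding diam_def by (subst Max_le_iff) auto

lemma diam_nonneg: "0 < n \<Longrightarrow> 0 \<le> diam n r"
  using diam_ge[of 0 n 0 r] by simp

lemma diam_pert:
  assumes "0 < n" "\<And>i. i < n \<Longrightarrow> norm (e i) \<le> c"
  shows "diam n (\<lambda>i. u i + e i) \<le> diam n u + 2 * c"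
proof (rule diam_le[OF assms(1)])
  fix i j assume ij: "i < n" "j < n"
  have eq: "u i + e i - (u j + e j) = (u i - u j) + (e i - e j)" by simp
  have "norm (u i + e i - (u j + e j)) \<le> norm (u i - u j) + norm (e i) + norm (e j)"
    unfolding eq using norm_triangle_ineq[of "u i - u j" "e i - e j"] norm_triangle_ineq4[of "e i" "e j"] by simp
  also have "\<dots> \<le> diam n u + c + c" using ij assms(2) diam_ge[of i n j u] by (intro add_mono) auto
  finally show "norm (u i + e i - (u j + e j)) \<le> diam n u + 2 * c" by simp
qed

fun prodM :: "nat \<Rightarrow> (nat \<Rightarrow> nat \<Rightarrow> nat \<Rightarrow> real) \<Rightarrow> nat \<Rightarrow> nat \<Rightarrow> nat \<Rightarrow> nat \<Rightarrow> real" where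
  "prodM n M s 0 i j = (if i = j then 1 else 0)"
| "prodM n M s (Suc m) i j = (\<Sum>l<n. M (s+m) i l * prodM n M s m l j)"

lemma flow:
  fixes v :: "nat \<Rightarrow> nat \<Rightarrow> 'b::real_vector"
  assumes rec: "\<And>m i. i < n \<Longrightarrow> v (Suc m) i = (\<Sum>j<n. M (s+m) i j *\<^sub>R v m j)"
  shows "i < n \<Longrightarrow> v m i = (\<Sum>j<n. prodM n M s m i j *\<^sub>R v 0 j)"
proof (induction m arbitrary: i)
  case 0
  then show ?case by (simp add: if_distrib[of "\<lambda>a. a *\<^sub>R _"] sum.delta cong: if_cong)
next
  case (Suc m)
  have "v (Suc m) i = (\<Sum>l<n. M (s+m) i l *\<^sub>R (\<Sum>j<n. prodM n M s m l j *\<^sub>R v 0 j))"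
    using rec[OF Suc.prems] Suc.IH by simp
  also have "\<dots> = (\<Sum>l<n. \<Sum>j<n. (M (s+m) i l * prodM n M s m l j) *\<^sub>R v 0 j)"
    by (simp add: scaleR_sum_right)
  also have "\<dots> = (\<Sum>j<n. \<Sum>l<n. (M (s+m) i l * prodM n M s m l j) *\<^sub>R v 0 j)"
    by (rule sum.swap)
  also have "\<dots> = (\<Sum>j<n. prodM n M s (Suc m) i j *\<^sub>R v 0 j)"
    by (simp add: scaleR_sum_left)
  finally show ?case .
qed

lemma prodM_stoch:
  assumes nn: "\<And>t i j. i < n \<Longrightarrow> j < n \<Longrightarrow> 0 \<le> M t i j"
    and rs: "\<And>t i. i < n \<Longrightarrow> (\<Sum>j<n. M t i j) = 1"
  shows "i < n \<Longrightarrow> j < n \<Longrightarrow> 0 \<le> prodM n M s m i j"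
    and "i < n \<Longrightarrow> (\<Sum>j<n. prodM n M s m i j) = 1"
proof -
  have "(\<forall>i<n. \<forall>j<n. 0 \<le> prodM n M s m i j) \<and> (\<forall>i<n. (\<Sum>j<n. prodM n M s m i j) = 1)"
  proof (induction m)
    case 0 then show ?case by (simp add: sum.delta)
  next
    case (Suc m)
    have A: "\<forall>i<n. \<forall>j<n. 0 \<le> prodM n M s (Suc m) i j"
      using Suc nn by (auto intro!: sum_nonneg mult_nonneg_nonneg)
    have B: "(\<Sum>j<n. prodM n M s (Suc m) i j) = 1" if "i < n" for i
    proof -
      have "(\<Sum>j<n. prodM n M s (Suc m) i j) = (\<Sum>l<n. M (s+m) i l * (\<Sum>j<n. prodM n M s m l j))"
        by (simp add: sum_distrib_left) (rule sum.swap)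
      also have "\<dots> = (\<Sum>l<n. M (s+m) i l)" using Suc by simp
      finally show ?thesis using rs that by simp
    qed
    show ?case using A B by blast
  qed
  then show "i < n \<Longrightarrow> j < n \<Longrightarrow> 0 \<le> prodM n M s m i j"
    and "i < n \<Longrightarrow> (\<Sum>j<n. prodM n M s m i j) = 1" by auto
qed

fun reach :: "nat \<Rightarrow> (nat \<Rightarrow> (nat \<times> nat) set) \<Rightarrow> nat \<Rightarrow> nat \<Rightarrow> nat \<Rightarrow> nat set" where
  "reach n E s j 0 = {j}"
| "reach n E s j (Suc m) = reach n E s j m \<union> {i. i < n \<and> (\<exists>l\<in>reach n E s j m. (l, i) \<in> E (s+m))}"

lemma reach_sub: "j < n \<Longrightarrow> reach n E s j m \<subseteq> {..<n}"
  by (induction m) auto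

lemma reach_mono: "m \<le> m' \<Longrightarrow> reach n E s j m \<subseteq> reach n E s j m'"
proof (induction m' rule: dec_induct)
  case (step m') then show ?case by auto
qed simp

lemma prodM_nonneg:
  assumes nn: "\<And>t i j. i < n \<Longrightarrow> j < n \<Longrightarrow> 0 \<le> M t i j"
  shows "i < n \<Longrightarrow> j < n \<Longrightarrow> 0 \<le> prodM n M s m i j"
proof (induction m arbitrary: i)
  case (Suc m) show ?case using Suc nn by (auto intro!: sum_nonneg mult_nonneg_nonneg)
qed simp

lemma prodM_pos:
  assumes nn: "\<And>t i j. i < n \<Longrightarrow> j < n \<Longrightarrow> 0 \<le> M t i j"
    and dg: "\<And>t i. i < n \<Longrightarrow> \<beta> \<le> M t i i"
    and ed: "\<And>t i l. i < n \<Longrightarrow> l < n \<Longrightarrow> (l, i) \<in> E t \<Longrightarrow> \<beta> \<le> M t i l"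
    and b0: "0 \<le> \<beta>" and j: "j < n"
  shows "i \<in> reach n E s j m \<Longrightarrow> \<beta>^m \<le> prodM n M s m i j"
proof (induction m arbitrary: i)
  case 0 then show ?case by simp
next
  case (Suc m)
  have pnn: "\<And>a. a < n \<Longrightarrow> 0 \<le> prodM n M s m a j" using prodM_nonneg[where M=M and n=n and s=s and m=m, OF nn _ j] by blast
  have iin: "i < n" using Suc.prems reach_sub[OF j, of E s "Suc m"] by auto
  obtain l where l: "l < n" "l \<in> reach n E s j m" "\<beta> \<le> M (s+m) i l"
    using Suc.prems dg[OF iin] ed[OF iin] reach_sub[OF j, of E s m] by auto
  have "\<beta>^(Suc m) = \<beta> * \<beta>^m" by simp
  also have "\<dots> \<le> M (s+m) i l * prodM n M s m l j"
    using l Suc.IH[OF l(2)] b0 by (intro mult_mono) auto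
  also have "\<dots> \<le> (\<Sum>l<n. M (s+m) i l * prodM n M s m l j)"
    using l(1) nn[OF iin] pnn by (intro member_le_sum[where f="\<lambda>l. M (s+m) i l * prodM n M s m l j"])
      (auto intro!: mult_nonneg_nonneg)
  finally show ?case by simp
qed

lemma crossing:
  assumes "(a, b) \<in> R\<^sup>*" "a \<in> S" "b \<notin> S"
  shows "\<exists>x y. (x, y) \<in> R \<and> x \<in> S \<and> y \<notin> S"
  using assms by (induction rule: rtrancl_induct) auto

lemma reach_grow:
  assumes j: "j < n" and conn: "strongly_connected_on n (\<Union>t\<in>{s+m..<s+m+B}. E t)"
    and ne: "reach n E s j m \<noteq> {..<n}"
  shows "reach n E s j m \<subset> reach n E s j (m + B)"
proof -
  let ?R = "reach n E s j m"
  have sub: "?R \<subseteq> {..<n}" by (rule reach_sub[OF j])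
  obtain i where i: "i < n" "i \<notin> ?R" using sub ne by auto
  have jR: "j \<in> ?R" using reach_mono[of 0 m n E s j] by auto
  have "(j, i) \<in> ((\<Union>t\<in>{s+m..<s+m+B}. E t) \<inter> ({..<n} \<times> {..<n}))\<^sup>*"
    using conn j i unfolding strongly_connected_on_def by blast
  from crossing[OF this jR i(2)] obtain a b t where ab: "a \<in> ?R" "b \<notin> ?R" "(a, b) \<in> E t"
    "t \<in> {s+m..<s+m+B}" "b < n" by auto
  define m' where "m' = t - s"
  have m': "m \<le> m'" "m' < m + B" "t = s + m'" using ab(4) m'_def by auto
  have "a \<in> reach n E s j m'" using reach_mono[OF m'(1), of n E s j] ab(1) by auto
  then have "b \<in> reach n E s j (Suc m')" using ab m' by auto
  moreover have "reach n E s j (Suc m') \<subseteq> reach n E s j (m + B)" by (rule reach_mono) (use m' in simp)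
  ultimately have "b \<in> reach n E s j (m + B)" by blast
  moreover have "?R \<subseteq> reach n E s j (m + B)" by (rule reach_mono) simp
  ultimately show ?thesis using ab(2) by auto
qed

lemma reach_card:
  assumes j: "j < n" and conn: "\<And>k. strongly_connected_on n (\<Union>t\<in>{k..<k+B}. E t)"
  shows "min n (Suc m) \<le> card (reach n E s j (m * B))"
proof (induction m)
  case 0
  have "card (reach n E s j 0) = 1" by simp
  then show ?case by simp
next
  case (Suc m)
  have fin: "finite (reach n E s j k)" for k using finite_subset[OF reach_sub[OF j]] by simp
  show ?case
  proof (cases "reach n E s j (m * B) = {..<n}")
    case True
    have "reach n E s j (m * B) \<subseteq> reach n E s j (Suc m * B)" by (rule reach_mono) simp
    then have "{..<n} \<subseteq> reach n E s j (Suc m * B)" using True by simp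
    then have "{..<n} = reach n E s j (Suc m * B)" using reach_sub[OF j, of E s "Suc m * B"] by auto
    then have "card (reach n E s j (Suc m * B)) = n" by (metis card_lessThan)
    then show ?thesis by simp
  next
    case False
    have c: "strongly_connected_on n (\<Union>t\<in>{s+m*B..<s+m*B+B}. E t)" by (rule conn)
    have "reach n E s j (m * B) \<subset> reach n E s j (m * B + B)"
      by (rule reach_grow[OF j c False])
    then have "card (reach n E s j (m * B)) < card (reach n E s j (m * B + B))"
      using fin by (intro psubset_card_mono) auto
    moreover have "m * B + B = Suc m * B" by simp
    ultimately show ?thesis using Suc.IH by (metis Suc_leI le_trans min_le_iff_disj not_less_eq_eq min_def)
  qed
qed

lemma reach_full:
  assumes j: "j < n" and conn: "\<And>k. strongly_connected_on n (\<Union>t\<in>{k..<k+B}. E t)"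
  shows "reach n E s j (n * B) = {..<n}"
proof -
  have "min n (Suc n) \<le> card (reach n E s j (n * B))" by (rule reach_card[where E=E and B=B, OF j conn])
  then have "n \<le> card (reach n E s j (n * B))" by simp
  then show ?thesis using card_seteq[OF finite_lessThan reach_sub[OF j]] by simp
qed

lemma prodM_full:
  assumes nn: "\<And>t i j. i < n \<Longrightarrow> j < n \<Longrightarrow> 0 \<le> M t i j"
    and dg: "\<And>t i. i < n \<Longrightarrow> \<beta> \<le> M t i i"
    and ed: "\<And>t i l. i < n \<Longrightarrow> l < n \<Longrightarrow> (l, i) \<in> E t \<Longrightarrow> \<beta> \<le> M t i l"
    and b0: "0 \<le> \<beta>" and conn: "\<And>k. strongly_connected_on n (\<Union>t\<in>{k..<k+B}. E t)"
    and ij: "i < n" "j < n"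
  shows "\<beta>^(n*B) \<le> prodM n M s (n*B) i j"
proof -
  have "i \<in> reach n E s j (n*B)" using reach_full[where E=E and B=B and s=s, OF ij(2) conn] ij(1) by simp
  then show ?thesis using prodM_pos[where n=n and M=M and \<beta>=\<beta> and E=E and j=j and s=s and m="n*B" and i=i] nn dg ed b0 ij(2) by blast
qed

lemma contract:
  fixes r :: "nat \<Rightarrow> 'b::real_normed_vector"
  assumes n0: "0 < n" and nn: "\<And>i j. i < n \<Longrightarrow> j < n \<Longrightarrow> 0 \<le> Q i j"
    and rs: "\<And>i. i < n \<Longrightarrow> (\<Sum>j<n. Q i j) = 1"
    and lb: "\<And>i j. i < n \<Longrightarrow> j < n \<Longrightarrow> \<eta> \<le> Q i j" and e0: "0 \<le> \<eta>"
  shows "diam n (\<lambda>i. \<Sum>j<n. Q i j *\<^sub>R r j) \<le> (1 - \<eta>) * diam n r"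
proof (rule diam_le[OF n0])
  fix i i' assume ii: "i < n" "i' < n"
  define a where "a j = Q i j - \<eta>" for j
  define b where "b j = Q i' j - \<eta>" for j
  define S where "S = 1 - real n * \<eta>"
  have a0: "j < n \<Longrightarrow> 0 \<le> a j" for j using lb ii unfolding a_def by auto
  have b0: "j < n \<Longrightarrow> 0 \<le> b j" for j using lb ii unfolding b_def by auto
  have sa: "(\<Sum>j<n. a j) = S" using rs[OF ii(1)] unfolding a_def S_def by (simp add: sum_subtractf)
  have sb: "(\<Sum>j<n. b j) = S" using rs[OF ii(2)] unfolding b_def S_def by (simp add: sum_subtractf)
  have "0 \<le> (\<Sum>j<n. a j)" using a0 by (intro sum_nonneg) auto
  then have S0: "0 \<le> S" using sa by simp
  have "1 \<le> real n" using n0 by simp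
  then have "\<eta> \<le> real n * \<eta>" using e0 mult_right_mono[of 1 "real n" \<eta>] by simp
  then have Sle: "S \<le> 1 - \<eta>" unfolding S_def by simp
  have dec: "(\<Sum>j<n. Q i j *\<^sub>R r j) - (\<Sum>j<n. Q i' j *\<^sub>R r j) = (\<Sum>j<n. a j *\<^sub>R r j) - (\<Sum>j<n. b j *\<^sub>R r j)"
    unfolding a_def b_def by (simp add: scaleR_diff_left sum_subtractf)
  have dbl: "(\<Sum>j<n. \<Sum>l<n. (a j * b l) *\<^sub>R (r j - r l)) = S *\<^sub>R ((\<Sum>j<n. a j *\<^sub>R r j) - (\<Sum>j<n. b j *\<^sub>R r j))"
  proof -
    have "(\<Sum>j<n. \<Sum>l<n. (a j * b l) *\<^sub>R (r j - r l))
        = (\<Sum>j<n. \<Sum>l<n. (a j * b l) *\<^sub>R r j) - (\<Sum>j<n. \<Sum>l<n. (a j * b l) *\<^sub>R r l)"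
      by (simp add: scaleR_diff_right sum_subtractf)
    also have "(\<Sum>j<n. \<Sum>l<n. (a j * b l) *\<^sub>R r j) = S *\<^sub>R (\<Sum>j<n. a j *\<^sub>R r j)"
      by (simp add: scaleR_sum_right sb[symmetric] scaleR_sum_left[symmetric] mult.commute sum_distrib_left)
    also have "(\<Sum>j<n. \<Sum>l<n. (a j * b l) *\<^sub>R r l) = S *\<^sub>R (\<Sum>l<n. b l *\<^sub>R r l)"
      by (subst sum.swap) (simp add: scaleR_sum_right sa[symmetric] scaleR_sum_left[symmetric] sum_distrib_left mult.commute)
    finally show ?thesis by (simp add: scaleR_diff_right)
  qed
  have "S * norm ((\<Sum>j<n. a j *\<^sub>R r j) - (\<Sum>j<n. b j *\<^sub>R r j)) \<le> S * (S * diam n r)"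
  proof -
    have "S * norm ((\<Sum>j<n. a j *\<^sub>R r j) - (\<Sum>j<n. b j *\<^sub>R r j))
        = norm (\<Sum>j<n. \<Sum>l<n. (a j * b l) *\<^sub>R (r j - r l))" using dbl S0 by simp
    also have "\<dots> \<le> (\<Sum>j<n. \<Sum>l<n. norm ((a j * b l) *\<^sub>R (r j - r l)))"
      by (rule order_trans[OF norm_sum sum_mono[OF norm_sum]])
    also have "\<dots> \<le> (\<Sum>j<n. \<Sum>l<n. (a j * b l) * diam n r)"
      using a0 b0 diam_ge[of _ n _ r] by (intro sum_mono) (auto intro!: mult_left_mono)
    also have "\<dots> = S * (S * diam n r)"
      by (simp add: sum_distrib_right[symmetric] sum_distrib_left[symmetric] sa sb mult_ac)
    finally show ?thesis .
  qed
  then have key: "norm ((\<Sum>j<n. a j *\<^sub>R r j) - (\<Sum>j<n. b j *\<^sub>R r j)) \<le> S * diam n r" if "0 < S"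
    using that by simp
  have "norm ((\<Sum>j<n. Q i j *\<^sub>R r j) - (\<Sum>j<n. Q i' j *\<^sub>R r j)) \<le> S * diam n r"
  proof (cases "S = 0")
    case True
    have "\<forall>j\<in>{..<n}. a j = 0" using sa True a0 by (subst sum_nonneg_eq_0_iff[symmetric]) auto
    moreover have "\<forall>j\<in>{..<n}. b j = 0" using sb True b0 by (subst sum_nonneg_eq_0_iff[symmetric]) auto
    ultimately show ?thesis unfolding dec using True by simp
  next
    case False then show ?thesis unfolding dec using key S0 by simp
  qed
  also have "\<dots> \<le> (1 - \<eta>) * diam n r" using Sle diam_nonneg[OF n0, of r] by (rule mult_right_mono)
  finally show "norm ((\<Sum>j<n. Q i j *\<^sub>R r j) - (\<Sum>j<n. Q i' j *\<^sub>R r j)) \<le> (1 - \<eta>) * diam n r" .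
qed


lemma diam_cong: "(\<And>i. i < n \<Longrightarrow> f i = g i) \<Longrightarrow> diam n f = diam n g"
  unfolding diam_def by (intro arg_cong[where f=Max] image_cong) auto

lemma conv_norm_le:
  fixes a :: "nat \<Rightarrow> 'b::real_normed_vector"
  assumes nn: "\<And>j. j < n \<Longrightarrow> 0 \<le> w j" and s1: "(\<Sum>j<n. w j) = 1"
    and b: "\<And>j. j < n \<Longrightarrow> norm (a j) \<le> c"
  shows "norm (\<Sum>j<n. w j *\<^sub>R a j) \<le> c"
proof -
  have "norm (\<Sum>j<n. w j *\<^sub>R a j) \<le> (\<Sum>j<n. norm (w j *\<^sub>R a j))" by (rule norm_sum)
  also have "\<dots> \<le> (\<Sum>j<n. w j * c)" using nn b by (intro sum_mono) (auto intro: mult_left_mono)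
  also have "\<dots> = c" using s1 by (simp add: sum_distrib_right[symmetric])
  finally show ?thesis .
qed

lemma dyn_diam:
  fixes r e :: "nat \<Rightarrow> nat \<Rightarrow> 'b::real_normed_vector"
  assumes n0: "0 < n"
    and nn: "\<And>t i j. i < n \<Longrightarrow> j < n \<Longrightarrow> 0 \<le> P t i j"
    and rs: "\<And>t i. i < n \<Longrightarrow> (\<Sum>j<n. P t i j) = 1"
    and lb: "\<And>k i j. i < n \<Longrightarrow> j < n \<Longrightarrow> \<eta> \<le> prodM n P k T i j" and e0: "0 \<le> \<eta>"
    and rec: "\<And>t i. i < n \<Longrightarrow> r (Suc t) i = (\<Sum>j<n. P t i j *\<^sub>R r t j) + e t i"
    and eb: "\<And>t i. i < n \<Longrightarrow> norm (e t i) \<le> \<epsilon> t"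
  shows "diam n (r (Suc t)) \<le> diam n (r t) + 2 * \<epsilon> t"
    and "diam n (r (k + T)) \<le> (1 - \<eta>) * diam n (r k) + 2 * (\<Sum>t\<in>{k..<k+T}. \<epsilon> t)"
proof -
  have "diam n (r (Suc t)) = diam n (\<lambda>i. (\<Sum>j<n. P t i j *\<^sub>R r t j) + e t i)"
    by (rule diam_cong) (rule rec)
  also have "\<dots> \<le> diam n (\<lambda>i. \<Sum>j<n. P t i j *\<^sub>R r t j) + 2 * \<epsilon> t"
    by (rule diam_pert[OF n0 eb])
  also have "diam n (\<lambda>i. \<Sum>j<n. P t i j *\<^sub>R r t j) \<le> (1 - 0) * diam n (r t)"
    by (rule contract[OF n0]) (use nn rs in auto)
  finally show "diam n (r (Suc t)) \<le> diam n (r t) + 2 * \<epsilon> t" by simp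
next
  define w where "w = rec_nat (r k) (\<lambda>m wm i. \<Sum>l<n. P (k+m) i l *\<^sub>R wm l)"
  have w0: "w 0 = r k" unfolding w_def by simp
  have wS: "w (Suc m) i = (\<Sum>l<n. P (k+m) i l *\<^sub>R w m l)" for m i unfolding w_def by simp
  have wf: "w m i = (\<Sum>j<n. prodM n P k m i j *\<^sub>R r k j)" if "i < n" for m i
    using flow[of n w P k, OF wS that] w0 by simp
  have close: "\<forall>i<n. norm (r (k + m) i - w m i) \<le> (\<Sum>t\<in>{k..<k+m}. \<epsilon> t)" for m
  proof (induction m)
    case 0 then show ?case using w0 by simp
  next
    case (Suc m)
    show ?case
    proof (intro allI impI)
      fix i assume i: "i < n"
      have "r (k + Suc m) i - w (Suc m) i = (\<Sum>l<n. P (k+m) i l *\<^sub>R (r (k+m) l - w m l)) + e (k+m) i"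
        using rec[OF i, of "k+m"] wS[of m i] by (simp add: scaleR_diff_right sum_subtractf)
      then have "norm (r (k + Suc m) i - w (Suc m) i)
          \<le> norm (\<Sum>l<n. P (k+m) i l *\<^sub>R (r (k+m) l - w m l)) + norm (e (k+m) i)"
        by (simp add: norm_triangle_ineq)
      also have "\<dots> \<le> (\<Sum>t\<in>{k..<k+m}. \<epsilon> t) + \<epsilon> (k+m)"
        using Suc.IH nn rs i eb[OF i] by (intro add_mono conv_norm_le) auto
      also have "\<dots> = (\<Sum>t\<in>{k..<k + Suc m}. \<epsilon> t)" by simp
      finally show "norm (r (k + Suc m) i - w (Suc m) i) \<le> (\<Sum>t\<in>{k..<k + Suc m}. \<epsilon> t)" .
    qed
  qed
  have "diam n (r (k + T)) = diam n (\<lambda>i. w T i + (r (k + T) i - w T i))" by (rule diam_cong) simp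
  also have "\<dots> \<le> diam n (w T) + 2 * (\<Sum>t\<in>{k..<k+T}. \<epsilon> t)"
    by (rule diam_pert[OF n0]) (use close in auto)
  also have "diam n (w T) = diam n (\<lambda>i. \<Sum>j<n. prodM n P k T i j *\<^sub>R r k j)"
    by (rule diam_cong) (rule wf)
  also have "\<dots> \<le> (1 - \<eta>) * diam n (r k)"
    by (rule contract[OF n0 prodM_stoch(1)[OF nn rs] prodM_stoch(2)[OF nn rs] lb e0]) auto
  finally show "diam n (r (k + T)) \<le> (1 - \<eta>) * diam n (r k) + 2 * (\<Sum>t\<in>{k..<k+T}. \<epsilon> t)" by simp
qed


lemma convex_tangent:
  fixes f :: "'a::real_inner \<Rightarrow> real"
  assumes der: "(f has_derivative (\<lambda>h. inner D h)) (at x)"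
    and cvx: "\<And>t. 0 < t \<Longrightarrow> t < 1 \<Longrightarrow> f (x + t *\<^sub>R (w - x)) \<le> (1 - t) * f x + t * f w"
  shows "f x + inner D (w - x) \<le> f w"
proof -
  define g where "g t = f (x + t *\<^sub>R (w - x))" for t :: real
  have l: "((\<lambda>t::real. x + t *\<^sub>R (w - x)) has_derivative (\<lambda>t. t *\<^sub>R (w - x))) (at 0 within {0<..})"
    by (auto intro!: derivative_eq_intros)
  have d: "(f has_derivative (\<lambda>h. inner D h)) (at (x + 0 *\<^sub>R (w - x)))" using der by simp
  have "(g has_derivative (\<lambda>t. inner D (t *\<^sub>R (w - x)))) (at 0 within {0<..})"
    unfolding g_def by (rule has_derivative_compose[OF l d])
  moreover have "(\<lambda>t. inner D (t *\<^sub>R (w - x))) = (*) (inner D (w - x))"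
    by (auto simp: inner_scaleR_right mult.commute)
  ultimately have "(g has_field_derivative (inner D (w - x))) (at 0 within {0<..})"
    unfolding has_field_derivative_def by simp
  then have lim: "((\<lambda>y. (g y - g 0) / (y - 0)) \<longlongrightarrow> inner D (w - x)) (at_right 0)"
    unfolding has_field_derivative_iff .
  have ev: "eventually (\<lambda>y. (g y - g 0) / (y - 0) \<le> f w - f x) (at_right 0)"
    using eventually_at_right_real[OF zero_less_one]
  proof (rule eventually_mono)
    fix y :: real assume y: "y \<in> {0<..<1}"
    have "g y - g 0 \<le> y * (f w - f x)" using cvx[of y] y unfolding g_def by (simp add: algebra_simps)
    then show "(g y - g 0) / (y - 0) \<le> f w - f x" using y by (simp add: divide_le_eq mult.commute)
  qed
  have "inner D (w - x) \<le> f w - f x"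
    by (rule tendsto_le[OF trivial_limit_at_right_real tendsto_const lim ev])
  then show ?thesis by simp
qed

lemma subgrad_exists:
  fixes G :: "'a::euclidean_space \<Rightarrow> real"
  assumes cv: "convex_on U G" and op: "open U" and x: "x \<in> U"
  shows "\<exists>g. is_subgradient U G x g"
proof -
  have cU: "convex U" using cv by (simp add: convex_on_def)
  define S where "S = {(z, t). z \<in> U \<and> G z < t}"
  define T where "T = {(x, G x)}"
  have cS: "convex S" unfolding convex_def S_def
  proof (clarsimp)
    fix z1 t1 z2 t2 and u v :: real
    assume h: "z1 \<in> U" "G z1 < t1" "z2 \<in> U" "G z2 < t2" "0 \<le> u" "0 \<le> v" "u + v = 1"
    show "u *\<^sub>R z1 + v *\<^sub>R z2 \<in> U \<and> G (u *\<^sub>R z1 + v *\<^sub>R z2) < u * t1 + v * t2"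
    proof
      show "u *\<^sub>R z1 + v *\<^sub>R z2 \<in> U" using cU h unfolding convex_def by blast
      have "G (u *\<^sub>R z1 + v *\<^sub>R z2) \<le> u * G z1 + v * G z2" using cv h unfolding convex_on_def by blast
      also have "\<dots> < u * t1 + v * t2"
      proof (cases "u = 0")
        case True then show ?thesis using h by simp
      next
        case False
        then have "u * G z1 < u * t1" using h by simp
        moreover have "v * G z2 \<le> v * t2" using h by (simp add: mult_left_mono)
        ultimately show ?thesis by simp
      qed
      finally show "G (u *\<^sub>R z1 + v *\<^sub>R z2) < u * t1 + v * t2" .
    qed
  qed
  have cT: "convex T" unfolding T_def by simp
  have "(x, G x + 1) \<in> S" using x unfolding S_def by simp
  then have neS: "S \<noteq> {}" by blast
  have disj: "S \<inter> T = {}" unfolding S_def T_def by auto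
  obtain a b where ab: "a \<noteq> 0" "\<forall>s\<in>S. inner a s \<le> b" "\<forall>s\<in>T. b \<le> inner a s"
    using separating_hyperplane_sets[OF cS cT neS _ disj] unfolding T_def by auto
  obtain p c where pc: "a = (p, c)" by (cases a)
  have inS: "inner p z + c * t \<le> b" if "z \<in> U" "G z < t" for z t
    using ab(2) that pc unfolding S_def by (auto simp: inner_Pair)
  have inT: "b \<le> inner p x + c * G x" using ab(3) pc unfolding T_def by (auto simp: inner_Pair)
  have c0: "c \<le> 0"
  proof -
    have "inner p x + c * (G x + 1) \<le> inner p x + c * G x" using inS[OF x, of "G x + 1"] inT by simp
    then show ?thesis by (simp add: algebra_simps)
  qed
  have cne: "c \<noteq> 0"
  proof
    assume c: "c = 0"
    have p0: "p \<noteq> 0"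
    proof
      assume "p = 0"
      then have "a = 0" using pc c by (simp add: zero_prod_def)
      then show False using ab(1) by simp
    qed
    obtain e where e: "e > 0" "ball x e \<subseteq> U" using op x open_contains_ball by blast
    define z where "z = x + (e / (2 * norm p)) *\<^sub>R p"
    have np: "0 < norm p" using p0 by simp
    have "x - z = - ((e / (2 * norm p)) *\<^sub>R p)" unfolding z_def by simp
    then have "dist x z = (e / (2 * norm p)) * norm p" using e np by (simp add: dist_norm)
    also have "\<dots> = e / 2" using np by simp
    finally have "dist x z = e / 2" .
    then have "z \<in> U" using e by auto
    then have "inner p z \<le> inner p x" using inS[of z "G z + 1"] inT c by simp
    moreover have "inner p z = inner p x + (e / (2 * norm p)) * (norm p)^2"
    proof -
      have pp: "inner p p = (norm p)^2" by (simp add: power2_norm_eq_inner)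
      show ?thesis unfolding z_def inner_add_right inner_scaleR_right pp by simp
    qed
    moreover have "0 < (e / (2 * norm p)) * (norm p)^2" using p0 e by simp
    ultimately show False by simp
  qed
  then have cneg: "c < 0" using c0 by simp
  define g where "g = (- 1 / c) *\<^sub>R p"
  have "G x + inner g (z - x) \<le> G z" if z: "z \<in> U" for z
  proof -
    have Hs: "inner p z + c * G z \<le> inner p x + c * G x + (- c) * s" if "0 < s" for s
      using inS[OF z, of "G z + s"] inT that by (simp add: algebra_simps)
    have A: "inner p z + c * G z \<le> inner p x + c * G x"
    proof (rule field_le_epsilon)
      fix e :: real assume e: "0 < e"
      have "inner p z + c * G z \<le> inner p x + c * G x + (- c) * (e / (- c))"
      proof -
        have "0 < e / (- c)" using e cneg by (intro divide_pos_pos) auto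
        then show ?thesis by (rule Hs)
      qed
      then show "inner p z + c * G z \<le> inner p x + c * G x + e" using cneg by simp
    qed
    have "inner g (z - x) = (inner p x - inner p z) / c"
      unfolding g_def using cneg by (simp add: inner_diff_right field_simps)
    moreover have "(inner p x - inner p z) / c \<le> G z - G x"
    proof -
      have "(G z - G x) * c \<le> inner p x - inner p z" using A by (simp add: algebra_simps)
      then show ?thesis using neg_divide_le_eq[OF cneg] by simp
    qed
    ultimately show ?thesis by simp
  qed
  then show ?thesis unfolding is_subgradient_def by blast
qed

lemma delta_bound:
  fixes ft G :: "'a::euclidean_space \<Rightarrow> real" and c D x xt :: 'a
  assumes cX: "convex X" and xX: "x \<in> X" and xtX: "xt \<in> X" and XU: "X \<subseteq> U" and op: "open U"
    and cG: "convex_on U G" and sc: "strongly_convex_on \<tau> X ft" and tau: "0 < \<tau>"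
    and der: "(ft has_derivative (\<lambda>h. inner D h)) (at x)"
    and mn: "\<And>z. z \<in> X \<Longrightarrow> ft xt + inner c (xt - x) + G xt \<le> ft z + inner c (z - x) + G z"
    and Gb: "\<And>g. is_subgradient U G x g \<Longrightarrow> norm g \<le> LG"
  shows "norm (xt - x) \<le> 4 * (norm (D + c) + LG) / \<tau>"
proof -
  define h where "h z = ft z + inner c (z - x) + G z" for z
  define p where "p = (1/2) *\<^sub>R x + (1 - 1/2) *\<^sub>R xt"
  have pX: "p \<in> X" using cX xX xtX unfolding p_def convex_def by simp
  have SC: "\<And>t a b. a \<in> X \<Longrightarrow> b \<in> X \<Longrightarrow> 0 \<le> t \<Longrightarrow> t \<le> 1 \<Longrightarrow>
      ft (t *\<^sub>R a + (1 - t) *\<^sub>R b) \<le> t * ft a + (1 - t) * ft b - \<tau> / 2 * t * (1 - t) * (norm (a - b))\<^sup>2"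
    using sc unfolding strongly_convex_on_def by blast
  have ftp: "ft p \<le> (1/2) * ft x + (1 - 1/2) * ft xt - \<tau> / 2 * (1/2) * (1 - 1/2) * (norm (x - xt))\<^sup>2"
    unfolding p_def by (rule SC[OF xX xtX]) auto
  have Gp: "G p \<le> (1/2) * G x + (1 - 1/2) * G xt"
  proof -
    have xU: "x \<in> U" "xt \<in> U" using xX xtX XU by auto
    have CV: "\<And>a b u v. a \<in> U \<Longrightarrow> b \<in> U \<Longrightarrow> 0 \<le> u \<Longrightarrow> 0 \<le> v \<Longrightarrow> u + v = 1 \<Longrightarrow>
        G (u *\<^sub>R a + v *\<^sub>R b) \<le> u * G a + v * G b" using cG unfolding convex_on_def by blast
    show ?thesis unfolding p_def by (rule CV) (use xU in auto)
  qed
  have cp: "inner c (p - x) = (1/2) * inner c (xt - x)"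
    unfolding p_def by (simp add: inner_diff_right inner_add_right algebra_simps)
  have hle: "h xt \<le> h p" using mn[OF pX] unfolding h_def by simp
  define Q where "Q = \<tau> / 2 * (1/2) * (1 - 1/2) * (norm (x - xt))\<^sup>2"
  have hp: "h p = ft p + (1/2) * inner c (xt - x) + G p" unfolding h_def cp by simp
  have hx: "h x = ft x + G x" unfolding h_def by simp
  have hxt: "h xt = ft xt + inner c (xt - x) + G xt" unfolding h_def by simp
  have "2 * Q \<le> h x - h xt"
  proof -
    have f1: "ft p \<le> ft x / 2 + ft xt / 2 - Q" using ftp[folded Q_def] by simp
    have g1: "G p \<le> G x / 2 + G xt / 2" using Gp by simp
    show ?thesis using hle hp hx hxt f1 g1 by linarith
  qed
  moreover have "2 * Q = \<tau> / 4 * (norm (xt - x))\<^sup>2"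
  proof -
    have nm: "norm (x - xt) = norm (xt - x)" by (rule norm_minus_commute)
    show ?thesis unfolding Q_def nm by simp
  qed
  ultimately have H1: "\<tau> / 4 * (norm (xt - x))\<^sup>2 \<le> h x - h xt" by simp
  have tang: "ft x + inner D (xt - x) \<le> ft xt"
  proof (rule convex_tangent[OF der])
    fix t :: real assume t: "0 < t" "t < 1"
    have "x + t *\<^sub>R (xt - x) = t *\<^sub>R xt + (1 - t) *\<^sub>R x" by (simp add: algebra_simps)
    moreover have "ft (t *\<^sub>R xt + (1 - t) *\<^sub>R x) \<le> t * ft xt + (1 - t) * ft x - \<tau> / 2 * t * (1 - t) * (norm (xt - x))\<^sup>2"
      using SC[OF xtX xX, of t] t by simp
    moreover have "0 \<le> \<tau> / 2 * t * (1 - t) * (norm (xt - x))\<^sup>2" using tau t by simp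
    ultimately show "ft (x + t *\<^sub>R (xt - x)) \<le> (1 - t) * ft x + t * ft xt" by simp
  qed
  obtain g where g: "is_subgradient U G x g" using subgrad_exists[OF cG op] xX XU by blast
  have gb: "norm g \<le> LG" by (rule Gb[OF g])
  have Gs: "G x + inner g (xt - x) \<le> G xt" using g xtX XU unfolding is_subgradient_def by auto
  have "h xt - h x \<ge> inner (D + c + g) (xt - x)"
    using tang Gs unfolding h_def by (simp add: inner_add_left algebra_simps)
  moreover have "inner (D + c + g) (xt - x) \<ge> - ((norm (D + c) + LG) * norm (xt - x))"
  proof -
    have "\<bar>inner (D + c + g) (xt - x)\<bar> \<le> norm (D + c + g) * norm (xt - x)" by (rule Cauchy_Schwarz_ineq2)
    also have "\<dots> \<le> (norm (D + c) + LG) * norm (xt - x)"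
      using gb norm_triangle_ineq[of "D + c" g] by (intro mult_right_mono) auto
    finally show ?thesis by linarith
  qed
  ultimately have K: "\<tau> / 4 * (norm (xt - x))\<^sup>2 \<le> (norm (D + c) + LG) * norm (xt - x)"
    using H1 by linarith
  show ?thesis
  proof (cases "norm (xt - x) = 0")
    case True
    have "0 \<le> LG" using gb by (metis norm_ge_zero order_trans)
    then show ?thesis using True tau by simp
  next
    case False
    then have pos: "0 < norm (xt - x)" by simp
    have "\<tau> / 4 * norm (xt - x) \<le> norm (D + c) + LG"
      using K pos by (simp add: power2_eq_square mult.assoc[symmetric])
    then show ?thesis using tau by (simp add: field_simps)
  qed
qed


lemma small_gain:
  fixes Dx Dy M \<gamma> :: "nat \<Rightarrow> real" and C cy a0 a1 a2 \<rho> :: real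
  assumes r0: "0 \<le> \<rho>" and r1: "\<rho> < 1" and C0: "0 \<le> C" and cy0: "0 \<le> cy"
    and a00: "0 \<le> a0" and a10: "0 \<le> a1" and a20: "0 \<le> a2"
    and nDx: "\<And>k. 0 \<le> Dx k" and nDy: "\<And>k. 0 \<le> Dy k" and nM: "\<And>k. 0 \<le> M k" and ng: "\<And>k. 0 \<le> \<gamma> k"
    and g0: "\<gamma> \<longlonglongrightarrow> 0"
    and hx: "\<And>k. Dx k \<le> C * Dx 0 + C * (\<Sum>t<k. \<rho>^(k - 1 - t) * (\<gamma> t * M t))"
    and hy: "\<And>k. Dy k \<le> C * Dy 0 + C * cy * (\<Sum>t<k. \<rho>^(k - 1 - t) * (Dx t + \<gamma> t * M t))"
    and hm: "\<And>k. M k \<le> a0 + a1 * Dy k + a2 * Dx k"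
  shows "\<exists>Mb. \<forall>k. M k \<le> Mb"
proof -
  define G where "G = 1 / (1 - \<rho>)"
  have G0: "0 \<le> G" using r1 unfolding G_def by simp
  have geo: "(\<Sum>s<t. \<rho>^(t - 1 - s)) \<le> G" for t unfolding G_def by (rule geom_conv_le[OF r0 r1])
  define c4 where "c4 = a1 * C * cy * (C * G * G + G) + a2 * C * G"
  have c40: "0 \<le> c4" unfolding c4_def using a10 a20 C0 cy0 G0 by simp
  define e where "e = 1 / (2 * c4 + 2)"
  have e0: "0 < e" unfolding e_def using c40 by simp
  have ec4: "e * c4 \<le> 1/2" unfolding e_def using c40 by (simp add: field_simps)
  have "eventually (\<lambda>t. \<gamma> t < e) sequentially" using order_tendstoD(2)[OF g0 e0] .
  then obtain K where K: "\<And>t. t \<ge> K \<Longrightarrow> \<gamma> t \<le> e" unfolding eventually_sequentially by (meson less_imp_le)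
  define S0 where "S0 = (\<Sum>t<K. \<gamma> t * M t)"
  have S00: "0 \<le> S0" unfolding S0_def using ng nM by (intro sum_nonneg mult_nonneg_nonneg) auto
  define C4 where "C4 = a0 + a1 * (C * Dy 0 + C * cy * ((C * Dx 0 + C * S0) * G + S0)) + a2 * (C * Dx 0 + C * S0)"
  have C40: "0 \<le> C4" unfolding C4_def using a00 a10 a20 C0 cy0 G0 S00 nDx[of 0] nDy[of 0] by simp
  define Mb where "Mb = 2 * C4 + (\<Sum>t<K. M t)"
  have Mb0: "0 \<le> Mb" unfolding Mb_def using C40 nM by (simp add: sum_nonneg)
  have "M k \<le> Mb" for k
  proof (induction k rule: less_induct)
    case (less k)
    show ?case
    proof (cases "k < K")
      case True
      have "M k \<le> (\<Sum>t<K. M t)" using True nM by (intro member_le_sum) auto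
      then show ?thesis unfolding Mb_def using C40 by simp
    next
      case False
      have IH: "\<And>t. t < k \<Longrightarrow> M t \<le> Mb" using less by blast
      have sumb: "(\<Sum>s<t. \<rho>^(t - 1 - s) * (\<gamma> s * M s)) \<le> S0 + e * Mb * G" if tk: "t \<le> k" for t
      proof -
        have "(\<Sum>s<t. \<rho>^(t - 1 - s) * (\<gamma> s * M s))
            \<le> (\<Sum>s<t. (if s < K then \<gamma> s * M s else 0) + \<rho>^(t - 1 - s) * (e * Mb))"
        proof (intro sum_mono)
          fix s assume s: "s \<in> {..<t}"
          have p1: "\<rho>^(t - 1 - s) \<le> 1" using r0 r1 by (simp add: power_le_one)
          have p0: "0 \<le> \<rho>^(t - 1 - s)" using r0 by simp
          show "\<rho>^(t - 1 - s) * (\<gamma> s * M s) \<le> (if s < K then \<gamma> s * M s else 0) + \<rho>^(t - 1 - s) * (e * Mb)"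
          proof (cases "s < K")
            case True
            have "\<rho>^(t - 1 - s) * (\<gamma> s * M s) \<le> 1 * (\<gamma> s * M s)"
              using p1 ng[of s] nM[of s] by (intro mult_right_mono) auto
            moreover have "0 \<le> \<rho>^(t - 1 - s) * (e * Mb)" using p0 e0 Mb0 by simp
            ultimately show ?thesis using True by simp
          next
            case False
            have "\<gamma> s \<le> e" using K False by simp
            moreover have "M s \<le> Mb" using IH s tk by simp
            ultimately have "\<gamma> s * M s \<le> e * Mb" using ng[of s] nM[of s] by (intro mult_mono) auto
            then show ?thesis using False p0 by (simp add: mult_left_mono)
          qed
        qed
        also have "\<dots> = (\<Sum>s<t. (if s < K then \<gamma> s * M s else 0)) + e * Mb * (\<Sum>s<t. \<rho>^(t - 1 - s))"
          by (simp add: sum.distrib sum_distrib_left mult_ac)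
        also have "\<dots> \<le> S0 + e * Mb * G"
        proof (rule add_mono)
          have "(\<Sum>s<t. (if s < K then \<gamma> s * M s else 0)) = (\<Sum>s\<in>{..<t} \<inter> {s. s < K}. \<gamma> s * M s)"
            by (simp add: sum.inter_restrict)
          also have "\<dots> \<le> S0" unfolding S0_def using ng nM
            by (intro sum_mono2) (auto intro: mult_nonneg_nonneg)
          finally show "(\<Sum>s<t. (if s < K then \<gamma> s * M s else 0)) \<le> S0" .
          show "e * Mb * (\<Sum>s<t. \<rho>^(t - 1 - s)) \<le> e * Mb * G"
            using geo[of t] e0 Mb0 by (intro mult_left_mono) auto
        qed
        finally show ?thesis .
      qed
      define Xs where "Xs = C * Dx 0 + C * (S0 + e * Mb * G)"
      have dx: "Dx t \<le> Xs" if "t \<le> k" for t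
        using hx[of t] mult_left_mono[OF sumb[OF that] C0] unfolding Xs_def by linarith
      have dyk: "Dy k \<le> C * Dy 0 + C * cy * (Xs * G + (S0 + e * Mb * G))"
      proof -
        have "(\<Sum>t<k. \<rho>^(k - 1 - t) * (Dx t + \<gamma> t * M t))
            = (\<Sum>t<k. \<rho>^(k - 1 - t) * Dx t) + (\<Sum>t<k. \<rho>^(k - 1 - t) * (\<gamma> t * M t))"
          by (simp add: distrib_left sum.distrib)
        also have "(\<Sum>t<k. \<rho>^(k - 1 - t) * Dx t) \<le> (\<Sum>t<k. \<rho>^(k - 1 - t) * Xs)"
          using dx r0 by (intro sum_mono mult_left_mono) auto
        also have "\<dots> = Xs * (\<Sum>t<k. \<rho>^(k - 1 - t))" by (simp add: sum_distrib_left mult.commute)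
        also have "\<dots> \<le> Xs * G"
        proof -
          have "0 \<le> Xs" using dx[of 0] nDx[of 0] by simp
          then show ?thesis by (rule mult_left_mono[OF geo[of k]])
        qed
        finally have "(\<Sum>t<k. \<rho>^(k - 1 - t) * (Dx t + \<gamma> t * M t)) \<le> Xs * G + (S0 + e * Mb * G)"
          using sumb[of k] by simp
        then have "C * cy * (\<Sum>t<k. \<rho>^(k - 1 - t) * (Dx t + \<gamma> t * M t)) \<le> C * cy * (Xs * G + (S0 + e * Mb * G))"
          using C0 cy0 by (intro mult_left_mono) auto
        then show ?thesis using hy[of k] by simp
      qed
      have "M k \<le> a0 + a1 * (C * Dy 0 + C * cy * (Xs * G + (S0 + e * Mb * G))) + a2 * Xs"
        using hm[of k] mult_left_mono[OF dyk a10] mult_left_mono[OF dx[OF order_refl] a20] by linarith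
      also have "\<dots> = C4 + (e * c4) * Mb"
        unfolding C4_def c4_def Xs_def by (simp add: algebra_simps)
      also have "\<dots> \<le> C4 + (1/2) * Mb" using mult_right_mono[OF ec4 Mb0] by simp
      also have "\<dots> \<le> Mb" unfolding Mb_def using nM by (simp add: sum_nonneg)
      finally show ?thesis .
    qed
  qed
  then show ?thesis by blast
qed


theorem mainTheorem18:
  fixes I :: nat
    and X U :: "'a::euclidean_space set"
    and f :: "nat \<Rightarrow> 'a \<Rightarrow> real" and gradf :: "nat \<Rightarrow> 'a \<Rightarrow> 'a"
    and G :: "'a \<Rightarrow> real"
    and L :: "nat \<Rightarrow> real" and L_F L_G :: real
    and ft :: "nat \<Rightarrow> 'a \<Rightarrow> 'a \<Rightarrow> real" and gradft :: "nat \<Rightarrow> 'a \<Rightarrow> 'a \<Rightarrow> 'a"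
    and tau Lt :: "nat \<Rightarrow> real"
    and \<gamma> :: "nat \<Rightarrow> real"
    and E :: "nat \<Rightarrow> (nat \<times> nat) set" and B :: nat
    and A :: "nat \<Rightarrow> nat \<Rightarrow> nat \<Rightarrow> real" and \<kappa> :: real
    and x xhalf xt y :: "nat \<Rightarrow> nat \<Rightarrow> 'a" and \<phi> :: "nat \<Rightarrow> nat \<Rightarrow> real"
  assumes X_nonempty: "X \<noteq> {}" and X_closed: "closed X" and X_convex: "convex X"
    and O_open: "open U" and X_sub_O: "X \<subseteq> U"
    \<comment> \<open>smooth terms f_i: C^1 on U with L_i-Lipschitz gradient on X\<close>
    and f_grad: "\<And>i z. i < I \<Longrightarrow> z \<in> U \<Longrightarrow> (f i has_derivative (\<lambda>h. inner (gradf i z) h)) (at z)"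
    and f_C1: "\<And>i. i < I \<Longrightarrow> continuous_on U (gradf i)"
    and f_Lip: "\<And>i. i < I \<Longrightarrow> lipschitz_on (L i) X (gradf i)"
    \<comment> \<open>G convex\<close>
    and G_convex: "convex_on U G"
    \<comment> \<open>V bounded below on X\<close>
    and V_bdd: "\<exists>c. \<forall>z\<in>X. (\<Sum>i<I. f i z) + G z \<ge> c"
    \<comment> \<open>bounded gradients and subgradients\<close>
    and F_bdd: "\<And>z. z \<in> X \<Longrightarrow> norm (\<Sum>i<I. gradf i z) \<le> L_F"
    and G_bdd: "\<And>z g. z \<in> X \<Longrightarrow> is_subgradient U G z g \<Longrightarrow> norm g \<le> L_G"
    \<comment> \<open>step sizes\<close>
    and gamma_pos: "\<And>k. 0 < \<gamma> k" and gamma_le1: "\<And>k. \<gamma> k \<le> 1"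
    and gamma_div: "\<not> summable \<gamma>"
    and gamma_sq: "summable (\<lambda>k. (\<gamma> k)\<^sup>2)"
    \<comment> \<open>network: B-strongly connected digraphs\<close>
    and B_pos: "0 < B"
    and B_conn: "\<And>k. strongly_connected_on I (\<Union>t\<in>{k..<k+B}. E t)"
    \<comment> \<open>weights\<close>
    and kappa_pos: "0 < \<kappa>"
    and A_nonneg: "\<And>k i j. i < I \<Longrightarrow> j < I \<Longrightarrow> 0 \<le> A k i j"
    and A_zero: "\<And>k i j. i < I \<Longrightarrow> j < I \<Longrightarrow> j \<noteq> i \<Longrightarrow> (j, i) \<notin> E k \<Longrightarrow> A k i j = 0"
    and A_edge: "\<And>k i j. i < I \<Longrightarrow> j < I \<Longrightarrow> (j, i) \<in> E k \<Longrightarrow> A k i j \<ge> \<kappa>"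
    and A_diag: "\<And>k i. i < I \<Longrightarrow> A k i i \<ge> \<kappa>"
    and A_colstoch: "\<And>k j. j < I \<Longrightarrow> (\<Sum>i<I. A k i j) = 1"
    \<comment> \<open>surrogates (Assumption III.14); gradft i z w = gradient of ft i (.|w) at z\<close>
    and ft_tau_pos: "\<And>i. i < I \<Longrightarrow> 0 < tau i"
    and ft_strong: "\<And>i w. i < I \<Longrightarrow> w \<in> X \<Longrightarrow> strongly_convex_on (tau i) X (\<lambda>z. ft i z w)"
    and ft_grad: "\<And>i z w. i < I \<Longrightarrow> z \<in> U \<Longrightarrow> w \<in> X \<Longrightarrow>
        ((\<lambda>v. ft i v w) has_derivative (\<lambda>h. inner (gradft i z w) h)) (at z)"
    and ft_C1: "\<And>i w. i < I \<Longrightarrow> w \<in> X \<Longrightarrow> continuous_on U (\<lambda>z. gradft i z w)"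
    and ft_consistent: "\<And>i z. i < I \<Longrightarrow> z \<in> X \<Longrightarrow> gradft i z z = gradf i z"
    and ft_Lip: "\<And>i z. i < I \<Longrightarrow> z \<in> X \<Longrightarrow> lipschitz_on (Lt i) X (\<lambda>w. gradft i z w)"
    \<comment> \<open>SONATA initialization\<close>
    and init_x: "\<And>i. i < I \<Longrightarrow> x 0 i \<in> X"
    and init_phi: "\<And>i. i < I \<Longrightarrow> \<phi> 0 i = 1"
    and init_y: "\<And>i. i < I \<Longrightarrow> y 0 i = gradf i (x 0 i)"
    \<comment> \<open>SONATA iteration\<close>
    and step_xt_mem: "\<And>k i. i < I \<Longrightarrow> xt k i \<in> X"
    and step_xt_min: "\<And>k i z. i < I \<Longrightarrow> z \<in> X \<Longrightarrow>
        ft i (xt k i) (x k i) + inner (real I *\<^sub>R y k i - gradf i (x k i)) (xt k i - x k i) + G (xt k i)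
        \<le> ft i z (x k i) + inner (real I *\<^sub>R y k i - gradf i (x k i)) (z - x k i) + G z"
    and step_xhalf: "\<And>k i. i < I \<Longrightarrow> xhalf k i = x k i + \<gamma> k *\<^sub>R (xt k i - x k i)"
    and step_phi: "\<And>k i. i < I \<Longrightarrow> \<phi> (Suc k) i = (\<Sum>j<I. A k i j * \<phi> k j)"
    and step_x: "\<And>k i. i < I \<Longrightarrow>
        x (Suc k) i = (1 / \<phi> (Suc k) i) *\<^sub>R (\<Sum>j<I. (A k i j * \<phi> k j) *\<^sub>R xhalf k j)"
    and step_y: "\<And>k i. i < I \<Longrightarrow>
        y (Suc k) i = (1 / \<phi> (Suc k) i) *\<^sub>R (\<Sum>j<I. (A k i j * \<phi> k j) *\<^sub>R y k j)
                      + (1 / \<phi> (Suc k) i) *\<^sub>R (gradf i (x (Suc k) i) - gradf i (x k i))"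
  shows "\<forall>i<I.
    let d = (\<lambda>k. norm (x k i - (1 / real I) *\<^sub>R (\<Sum>j<I. \<phi> k j *\<^sub>R x k j))) in
      (d \<longlonglongrightarrow> 0) \<and> summable (\<lambda>k. \<gamma> k * d k) \<and> summable (\<lambda>k. (d k)\<^sup>2)"
proof (cases "I = 0")
  case True then show ?thesis by simp
next
  case False
  then have I0: "0 < I" by simp
  have rI1: "1 \<le> real I" using I0 by simp
  have kap1: "\<kappa> \<le> 1"
  proof -
    have "A 0 0 0 \<le> (\<Sum>i<I. A 0 i 0)"
      using I0 A_nonneg by (intro member_le_sum[where f="\<lambda>i. A 0 i 0"]) auto
    then show ?thesis using A_diag[OF I0, of 0] A_colstoch[OF I0, of 0] by simp
  qed
  have phi_nn: "0 \<le> \<phi> k i" if "i < I" for k i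
    using that
  proof (induction k arbitrary: i)
    case 0 then show ?case using init_phi by simp
  next
    case (Suc k)
    show ?case unfolding step_phi[OF Suc.prems] using Suc.IH A_nonneg Suc.prems
      by (auto intro!: sum_nonneg mult_nonneg_nonneg)
  qed
  have phi_sum: "(\<Sum>i<I. \<phi> k i) = real I" for k
  proof (induction k)
    case 0 then show ?case using init_phi by simp
  next
    case (Suc k)
    have "(\<Sum>i<I. \<phi> (Suc k) i) = (\<Sum>i<I. \<Sum>j<I. A k i j * \<phi> k j)"
      by (intro sum.cong refl) (simp add: step_phi)
    also have "\<dots> = (\<Sum>j<I. (\<Sum>i<I. A k i j) * \<phi> k j)"
      by (subst sum.swap) (simp add: sum_distrib_right)
    also have "\<dots> = (\<Sum>j<I. \<phi> k j)" using A_colstoch by simp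
    finally show ?case using Suc by simp
  qed
  have phi_ub: "\<phi> k i \<le> real I" if "i < I" for k i
  proof -
    have "\<phi> k i \<le> (\<Sum>i<I. \<phi> k i)" using that phi_nn by (intro member_le_sum[where f="\<phi> k"]) auto
    then show ?thesis using phi_sum by simp
  qed
  have phi_pow: "\<kappa>^k \<le> \<phi> k i" if "i < I" for k i
    using that
  proof (induction k arbitrary: i)
    case 0 then show ?case using init_phi by simp
  next
    case (Suc k)
    have "\<kappa>^(Suc k) = \<kappa> * \<kappa>^k" by simp
    also have "\<dots> \<le> A k i i * \<phi> k i"
      using A_diag[OF Suc.prems] Suc.IH[OF Suc.prems] kappa_pos A_nonneg[OF Suc.prems Suc.prems] by (intro mult_mono) auto
    also have "\<dots> \<le> (\<Sum>j<I. A k i j * \<phi> k j)"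
      using Suc.prems A_nonneg phi_nn by (intro member_le_sum[where f="\<lambda>j. A k i j * \<phi> k j"]) (auto intro: mult_nonneg_nonneg)
    finally show ?case using step_phi[OF Suc.prems] by simp
  qed
  define T where "T = I * B"
  have T0: "0 < T" unfolding T_def using I0 B_pos by simp
  have edA: "\<And>t i l. i < I \<Longrightarrow> l < I \<Longrightarrow> (l, i) \<in> E t \<Longrightarrow> \<kappa> \<le> A t i l" using A_edge by blast
  have prodA: "\<kappa>^T \<le> prodM I A s T i j" if "i < I" "j < I" for s i j
    unfolding T_def
    by (rule prodM_full[where M=A and E=E and B=B and \<beta>=\<kappa>, OF A_nonneg A_diag edA _ B_conn that])
      (use kappa_pos in auto)
  define m0 where "m0 = \<kappa>^T"
  have m00: "0 < m0" unfolding m0_def using kappa_pos by simp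
  have m01: "m0 \<le> 1" unfolding m0_def using kappa_pos kap1 by (simp add: power_le_one)
  have phi_lb: "m0 \<le> \<phi> k i" if i: "i < I" for k i
  proof (cases "k < T")
    case True
    have "\<kappa>^T \<le> \<kappa>^k" using True kappa_pos kap1 by (intro power_decreasing) auto
    then show ?thesis using phi_pow[OF i, of k] unfolding m0_def by simp
  next
    case False
    define s where "s = k - T"
    have ks: "k = s + T" using False s_def by simp
    have fl: "\<phi> (s + m) i = (\<Sum>j<I. prodM I A s m i j *\<^sub>R \<phi> (s + 0) j)" for m
      by (rule flow[where v="\<lambda>m i. \<phi> (s + m) i" and M=A and s=s, OF _ i]) (simp add: step_phi)
    have e1: "\<phi> k i = (\<Sum>j<I. prodM I A s T i j * \<phi> s j)" using fl[of T] ks by simp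
    have e2: "(\<Sum>j<I. \<kappa>^T * \<phi> s j) \<le> (\<Sum>j<I. prodM I A s T i j * \<phi> s j)"
      using prodA[OF i] phi_nn by (intro sum_mono mult_right_mono) auto
    have e3: "(\<Sum>j<I. \<kappa>^T * \<phi> s j) = \<kappa>^T * real I" using phi_sum[of s] by (simp add: sum_distrib_left[symmetric])
    have "\<kappa>^T * real I \<le> \<phi> k i" using e1 e2 e3 by linarith
    moreover have "\<kappa>^T \<le> \<kappa>^T * real I" using rI1 kappa_pos by simp
    ultimately show ?thesis unfolding m0_def by linarith
  qed
  have phi_pos: "0 < \<phi> k i" if "i < I" for k i using phi_lb[OF that, of k] m00 by linarith
  define P where "P k i j = A k i j * \<phi> k j / \<phi> (Suc k) i" for k i j
  have P_nn: "0 \<le> P k i j" if "i < I" "j < I" for k i j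
    unfolding P_def using that A_nonneg phi_nn phi_pos by (auto intro!: divide_nonneg_pos mult_nonneg_nonneg)
  have P_rs: "(\<Sum>j<I. P k i j) = 1" if i: "i < I" for k i
  proof -
    have "(\<Sum>j<I. P k i j) = (\<Sum>j<I. A k i j * \<phi> k j) / \<phi> (Suc k) i"
      unfolding P_def by (simp add: sum_divide_distrib)
    also have "\<dots> = 1" using step_phi[OF i] phi_pos[OF i, of "Suc k"] by simp
    finally show ?thesis .
  qed
  define \<beta> where "\<beta> = \<kappa> * m0 / real I"
  have b0: "0 \<le> \<beta>" unfolding \<beta>_def using kappa_pos m00 by simp
  have b1: "\<beta> \<le> 1"
  proof -
    have "\<kappa> * m0 \<le> 1 * 1" using kap1 m01 kappa_pos m00 by (intro mult_mono) auto
    then have "\<kappa> * m0 \<le> real I" using rI1 by linarith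
    then show ?thesis unfolding \<beta>_def using I0 by simp
  qed
  have P_lb: "\<beta> \<le> P k i j" if "i < I" "j < I" "\<kappa> \<le> A k i j" for k i j
  proof -
    have km: "0 \<le> A k i j * \<phi> k j" using A_nonneg[OF that(1,2)] phi_nn[OF that(2)] by simp
    have "\<kappa> * m0 \<le> A k i j * \<phi> k j" using that kappa_pos m00 phi_lb[OF that(2), of k] by (intro mult_mono) auto
    then show ?thesis unfolding \<beta>_def P_def using km
      using phi_pos[OF that(1), of "Suc k"] phi_ub[OF that(1), of "Suc k"] kappa_pos m00
      by (intro frac_le) auto
  qed
  have P_dg: "\<beta> \<le> P t i i" if "i < I" for t i using P_lb[OF that that A_diag[OF that]] .
  have P_ed: "\<beta> \<le> P t i l" if "i < I" "l < I" "(l, i) \<in> E t" for t i l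
    using P_lb[OF that(1,2) A_edge[OF that]] .
  have prodP: "\<beta>^T \<le> prodM I P s T i j" if "i < I" "j < I" for s i j
    unfolding T_def
    by (rule prodM_full[where M=P and E=E and B=B and \<beta>=\<beta>, OF P_nn P_dg P_ed b0 B_conn that])
  define \<eta> where "\<eta> = \<beta>^T / 2"
  have eta0: "0 < \<eta>" unfolding \<eta>_def \<beta>_def using kappa_pos m00 I0 by simp
  have eta1: "\<eta> \<le> 1/2" unfolding \<eta>_def using b0 b1 by (simp add: power_le_one)
  have prodP': "\<eta> \<le> prodM I P s T i j" if "i < I" "j < I" for s i j
    using prodP[OF that, of s] zero_le_power[OF b0, of T] unfolding \<eta>_def by linarith
  define q where "q = 1 - \<eta>"
  have q0: "0 < q" and q1: "q < 1" using eta0 eta1 unfolding q_def by auto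
  define \<rho> where "\<rho> = root T q"
  have rq: "\<rho>^T = q" unfolding \<rho>_def using T0 q0 by simp
  have r0: "0 < \<rho>" unfolding \<rho>_def using T0 q0 by (simp add: real_root_gt_zero)
  have r1: "\<rho> < 1" unfolding \<rho>_def using T0 q1 by simp
  have xform: "x (Suc k) i = (\<Sum>j<I. P k i j *\<^sub>R xhalf k j)" if i: "i < I" for k i
    unfolding step_x[OF i] scaleR_sum_right scaleR_scaleR P_def by (intro sum.cong refl) simp
  have xX: "x k i \<in> X" if "i < I" for k i
    using that
  proof (induction k arbitrary: i)
    case 0 then show ?case using init_x by simp
  next
    case (Suc k)
    have hX: "xhalf k j \<in> X" if j: "j < I" for j
    proof -
      have "xhalf k j = (1 - \<gamma> k) *\<^sub>R x k j + \<gamma> k *\<^sub>R xt k j"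
        unfolding step_xhalf[OF j] by (simp add: algebra_simps)
      moreover have "(1 - \<gamma> k) *\<^sub>R x k j + \<gamma> k *\<^sub>R xt k j \<in> X"
        by (rule convexD[OF X_convex Suc.IH[OF j] step_xt_mem[OF j]]) (use gamma_pos[of k] gamma_le1[of k] in auto)
      ultimately show ?thesis by simp
    qed
    show ?case unfolding xform[OF Suc.prems]
      by (rule convex_sum[OF _ X_convex]) (use P_rs[OF Suc.prems] P_nn[OF Suc.prems] hX in auto)
  qed
  define M where "M k = (\<Sum>j<I. norm (xt k j - x k j))" for k
  have M0: "0 \<le> M k" for k unfolding M_def by (simp add: sum_nonneg)
  have Mge: "norm (xt k j - x k j) \<le> M k" if "j < I" for k j
    unfolding M_def using that by (intro member_le_sum[where f="\<lambda>j. norm (xt k j - x k j)"]) auto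
  define ex where "ex t i = \<gamma> t *\<^sub>R (\<Sum>j<I. P t i j *\<^sub>R (xt t j - x t j))" for t i
  have xrec: "x (Suc t) i = (\<Sum>j<I. P t i j *\<^sub>R x t j) + ex t i" if i: "i < I" for t i
  proof -
    have "x (Suc t) i = (\<Sum>j<I. P t i j *\<^sub>R (x t j + \<gamma> t *\<^sub>R (xt t j - x t j)))"
      unfolding xform[OF i] by (intro sum.cong refl) (simp add: step_xhalf)
    also have "\<dots> = (\<Sum>j<I. P t i j *\<^sub>R x t j) + ex t i"
      unfolding ex_def by (simp add: scaleR_add_right sum.distrib scaleR_sum_right scaleR_scaleR mult.commute)
    finally show ?thesis .
  qed
  have exb: "norm (ex t i) \<le> \<gamma> t * M t" if i: "i < I" for t i
  proof -
    have "norm (\<Sum>j<I. P t i j *\<^sub>R (xt t j - x t j)) \<le> M t"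
      by (rule conv_norm_le) (use P_nn[OF i] P_rs[OF i] Mge in auto)
    then show ?thesis unfolding ex_def using gamma_pos[of t] by (simp add: mult_left_mono)
  qed
  define Dx where "Dx k = diam I (x k)" for k
  have Dx0: "0 \<le> Dx k" for k unfolding Dx_def by (rule diam_nonneg[OF I0])
  have Hx1: "Dx (Suc t) \<le> Dx t + 2 * (\<gamma> t * M t)" for t
    unfolding Dx_def by (rule dyn_diam(1)[OF I0 P_nn P_rs prodP' eta0[THEN less_imp_le] xrec exb])
  have Hx2: "Dx (k + T) \<le> q * Dx k + 2 * (\<Sum>t\<in>{k..<k+T}. \<gamma> t * M t)" for k
    unfolding Dx_def q_def by (rule dyn_diam(2)[OF I0 P_nn P_rs prodP' eta0[THEN less_imp_le] xrec exb])
  have Wx: "Dx k \<le> (\<rho>^k / q) * Dx 0 + (2/q) * (\<Sum>t<k. \<rho>^(k - 1 - t) * (\<gamma> t * M t))" for k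
    by (rule window_bound[OF T0 r0 less_imp_le[OF r1] rq Dx0 _ Hx1 Hx2])
      (use gamma_pos M0 in \<open>auto intro: mult_nonneg_nonneg less_imp_le\<close>)
  define xbar where "xbar k = (1 / real I) *\<^sub>R (\<Sum>j<I. \<phi> k j *\<^sub>R x k j)" for k
  have wsum: "(\<Sum>j<I. \<phi> k j / real I) = 1" for k using phi_sum[of k] I0 by (simp add: sum_divide_distrib[symmetric])
  have wnn: "0 \<le> \<phi> k j / real I" if "j < I" for k j using phi_nn[OF that] by simp
  have dev: "r i - (1 / real I) *\<^sub>R (\<Sum>j<I. \<phi> k j *\<^sub>R r j) = (\<Sum>j<I. (\<phi> k j / real I) *\<^sub>R (r i - r j))"
    for k i and r :: "nat \<Rightarrow> 'a"
  proof -
    have "(\<Sum>j<I. (\<phi> k j / real I) *\<^sub>R (r i - r j)) = (\<Sum>j<I. \<phi> k j / real I) *\<^sub>R r i - (\<Sum>j<I. (\<phi> k j / real I) *\<^sub>R r j)"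
      by (simp add: scaleR_diff_right sum_subtractf scaleR_sum_left)
    also have "\<dots> = r i - (1 / real I) *\<^sub>R (\<Sum>j<I. \<phi> k j *\<^sub>R r j)"
      using wsum[of k] by (simp add: scaleR_sum_right divide_inverse mult.commute)
    finally show ?thesis by simp
  qed
  have devb: "norm (r i - (1 / real I) *\<^sub>R (\<Sum>j<I. \<phi> k j *\<^sub>R r j)) \<le> diam I r" if i: "i < I" for k i and r :: "nat \<Rightarrow> 'a"
    unfolding dev by (rule conv_norm_le) (use wnn wsum diam_ge[OF i] in auto)
  have xbarX: "xbar k \<in> X" for k
  proof -
    have "xbar k = (\<Sum>j<I. (\<phi> k j / real I) *\<^sub>R x k j)"
      unfolding xbar_def by (simp add: scaleR_sum_right divide_inverse mult.commute)
    also have "\<dots> \<in> X" by (rule convex_sum[OF _ X_convex]) (use wsum wnn xX in auto)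
    finally show ?thesis .
  qed
  have dxb: "norm (x k i - xbar k) \<le> Dx k" if "i < I" for k i
    unfolding xbar_def Dx_def by (rule devb[OF that])
  define g where "g k i = gradf i (x k i)" for k i
  have Lnn: "0 \<le> L i" if "i < I" for i using f_Lip[OF that] unfolding lipschitz_on_def by simp
  define Ls where "Ls = (\<Sum>i<I. L i)"
  have Ls0: "0 \<le> Ls" unfolding Ls_def using Lnn by (intro sum_nonneg) auto
  have LLs: "L i \<le> Ls" if "i < I" for i unfolding Ls_def using that Lnn by (intro member_le_sum[where f=L]) auto
  have glip: "norm (gradf i a - gradf i b) \<le> Ls * norm (a - b)" if "i < I" "a \<in> X" "b \<in> X" for i a b
  proof -
    have "norm (gradf i a - gradf i b) \<le> L i * norm (a - b)"
      using lipschitz_onD[OF f_Lip[OF that(1)] that(2,3)] by (simp add: dist_norm)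
    also have "\<dots> \<le> Ls * norm (a - b)" using LLs[OF that(1)] by (simp add: mult_right_mono)
    finally show ?thesis .
  qed
  have xdiff: "norm (x (Suc k) i - x k i) \<le> Dx k + \<gamma> k * M k" if i: "i < I" for k i
  proof -
    have "x (Suc k) i - x k i = (\<Sum>j<I. P k i j *\<^sub>R (x k j - x k i)) + ex k i"
    proof -
      have "(\<Sum>j<I. P k i j *\<^sub>R (x k j - x k i)) = (\<Sum>j<I. P k i j *\<^sub>R x k j) - (\<Sum>j<I. P k i j) *\<^sub>R x k i"
        by (simp add: scaleR_diff_right sum_subtractf scaleR_sum_left)
      then show ?thesis using xrec[OF i, of k] P_rs[OF i, of k] by simp
    qed
    then have "norm (x (Suc k) i - x k i) \<le> norm (\<Sum>j<I. P k i j *\<^sub>R (x k j - x k i)) + norm (ex k i)"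
      by (simp add: norm_triangle_ineq)
    also have "\<dots> \<le> Dx k + \<gamma> k * M k"
    proof (rule add_mono)
      show "norm (\<Sum>j<I. P k i j *\<^sub>R (x k j - x k i)) \<le> Dx k"
        unfolding Dx_def by (rule conv_norm_le) (use P_nn[OF i] P_rs[OF i] diam_ge[OF _ i] in auto)
      show "norm (ex k i) \<le> \<gamma> k * M k" by (rule exb[OF i])
    qed
    finally show ?thesis .
  qed
  define cy where "cy = Ls / m0"
  have cy0: "0 \<le> cy" unfolding cy_def using Ls0 m00 by simp
  define ey where "ey t i = (1 / \<phi> (Suc t) i) *\<^sub>R (g (Suc t) i - g t i)" for t i
  have yrec: "y (Suc t) i = (\<Sum>j<I. P t i j *\<^sub>R y t j) + ey t i" if i: "i < I" for t i
    unfolding step_y[OF i] ey_def g_def scaleR_sum_right scaleR_scaleR P_def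
    by (intro arg_cong2[where f="(+)"] sum.cong refl) simp_all
  have eyb: "norm (ey t i) \<le> cy * (Dx t + \<gamma> t * M t)" if i: "i < I" for t i
  proof -
    have "norm (ey t i) = (1 / \<phi> (Suc t) i) * norm (g (Suc t) i - g t i)"
      unfolding ey_def using phi_pos[OF i, of "Suc t"] by simp
    also have "\<dots> \<le> (1 / m0) * (Ls * (Dx t + \<gamma> t * M t))"
    proof (rule mult_mono)
      show "1 / \<phi> (Suc t) i \<le> 1 / m0"
        by (rule divide_left_mono) (use phi_lb[OF i, of "Suc t"] m00 phi_pos[OF i, of "Suc t"] in auto)
      have "norm (g (Suc t) i - g t i) \<le> Ls * norm (x (Suc t) i - x t i)"
        unfolding g_def by (rule glip[OF i xX[OF i] xX[OF i]])
      also have "\<dots> \<le> Ls * (Dx t + \<gamma> t * M t)" using xdiff[OF i] Ls0 by (rule mult_left_mono)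
      finally show "norm (g (Suc t) i - g t i) \<le> Ls * (Dx t + \<gamma> t * M t)" .
    qed (use m00 in auto)
    finally show ?thesis unfolding cy_def by simp
  qed
  define Dy where "Dy k = diam I (y k)" for k
  have Dy0: "0 \<le> Dy k" for k unfolding Dy_def by (rule diam_nonneg[OF I0])
  have Hy1: "Dy (Suc t) \<le> Dy t + 2 * (cy * (Dx t + \<gamma> t * M t))" for t
    unfolding Dy_def by (rule dyn_diam(1)[OF I0 P_nn P_rs prodP' eta0[THEN less_imp_le] yrec eyb])
  have Hy2: "Dy (k + T) \<le> q * Dy k + 2 * (\<Sum>t\<in>{k..<k+T}. cy * (Dx t + \<gamma> t * M t))" for k
    unfolding Dy_def q_def by (rule dyn_diam(2)[OF I0 P_nn P_rs prodP' eta0[THEN less_imp_le] yrec eyb])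
  have Wy: "Dy k \<le> (\<rho>^k / q) * Dy 0 + (2/q) * (\<Sum>t<k. \<rho>^(k - 1 - t) * (cy * (Dx t + \<gamma> t * M t)))" for k
    by (rule window_bound[OF T0 r0 less_imp_le[OF r1] rq Dy0 _ Hy1 Hy2])
      (rule mult_nonneg_nonneg[OF cy0 add_nonneg_nonneg[OF Dx0 mult_nonneg_nonneg[OF less_imp_le[OF gamma_pos] M0]]])
  have cons: "(\<Sum>i<I. \<phi> k i *\<^sub>R y k i) = (\<Sum>i<I. g k i)" for k
  proof (induction k)
    case 0 then show ?case using init_phi init_y unfolding g_def by simp
  next
    case (Suc k)
    have "(\<Sum>i<I. \<phi> (Suc k) i *\<^sub>R y (Suc k) i)
        = (\<Sum>i<I. (\<Sum>j<I. (A k i j * \<phi> k j) *\<^sub>R y k j) + (g (Suc k) i - g k i))"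
    proof (intro sum.cong refl)
      fix i assume "i \<in> {..<I}"
      then have i: "i < I" by simp
      show "\<phi> (Suc k) i *\<^sub>R y (Suc k) i = (\<Sum>j<I. (A k i j * \<phi> k j) *\<^sub>R y k j) + (g (Suc k) i - g k i)"
        unfolding step_y[OF i] g_def using phi_pos[OF i, of "Suc k"] by (simp add: scaleR_add_right)
    qed
    also have "\<dots> = (\<Sum>i<I. \<Sum>j<I. (A k i j * \<phi> k j) *\<^sub>R y k j) + ((\<Sum>i<I. g (Suc k) i) - (\<Sum>i<I. g k i))"
      by (simp add: sum.distrib sum_subtractf)
    also have "(\<Sum>i<I. \<Sum>j<I. (A k i j * \<phi> k j) *\<^sub>R y k j) = (\<Sum>j<I. \<Sum>i<I. (A k i j * \<phi> k j) *\<^sub>R y k j)"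
      by (rule sum.swap)
    also have "\<dots> = (\<Sum>j<I. \<phi> k j *\<^sub>R y k j)"
    proof (intro sum.cong refl)
      fix j assume "j \<in> {..<I}"
      then have j: "j < I" by simp
      have "(\<Sum>i<I. (A k i j * \<phi> k j) *\<^sub>R y k j) = ((\<Sum>i<I. A k i j) * \<phi> k j) *\<^sub>R y k j"
        by (simp add: scaleR_sum_left sum_distrib_right)
      then show "(\<Sum>i<I. (A k i j * \<phi> k j) *\<^sub>R y k j) = \<phi> k j *\<^sub>R y k j" using A_colstoch[OF j] by simp
    qed
    finally show ?case using Suc by simp
  qed
  have LF0: "0 \<le> L_F" using F_bdd[OF init_x[OF I0]] by (metis norm_ge_zero order_trans)
  have gsum: "norm (\<Sum>j<I. g k j) \<le> L_F + Ls * Dx k" for k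
  proof -
    have "(\<Sum>j<I. g k j) = (\<Sum>j<I. gradf j (xbar k)) + (\<Sum>j<I. gradf j (x k j) - gradf j (xbar k))"
      unfolding g_def by (simp add: sum_subtractf)
    then have "norm (\<Sum>j<I. g k j) \<le> norm (\<Sum>j<I. gradf j (xbar k)) + norm (\<Sum>j<I. gradf j (x k j) - gradf j (xbar k))"
      by (simp add: norm_triangle_ineq)
    also have "\<dots> \<le> L_F + (\<Sum>j<I. L j * Dx k)"
    proof (rule add_mono)
      show "norm (\<Sum>j<I. gradf j (xbar k)) \<le> L_F" by (rule F_bdd[OF xbarX])
      have "norm (\<Sum>j<I. gradf j (x k j) - gradf j (xbar k)) \<le> (\<Sum>j<I. norm (gradf j (x k j) - gradf j (xbar k)))"
        by (rule norm_sum)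
      also have "\<dots> \<le> (\<Sum>j<I. L j * Dx k)"
      proof (rule sum_mono)
        fix j assume "j \<in> {..<I}"
        then have j: "j < I" by simp
        have "norm (gradf j (x k j) - gradf j (xbar k)) \<le> L j * norm (x k j - xbar k)"
          using lipschitz_onD[OF f_Lip[OF j] xX[OF j] xbarX] by (simp add: dist_norm)
        also have "\<dots> \<le> L j * Dx k" using dxb[OF j] Lnn[OF j] by (rule mult_left_mono)
        finally show "norm (gradf j (x k j) - gradf j (xbar k)) \<le> L j * Dx k" .
      qed
      finally show "norm (\<Sum>j<I. gradf j (x k j) - gradf j (xbar k)) \<le> (\<Sum>j<I. L j * Dx k)" .
    qed
    also have "\<dots> = L_F + Ls * Dx k" unfolding Ls_def by (simp add: sum_distrib_right)
    finally show ?thesis .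
  qed
  have ynorm: "norm (y k i) \<le> Dy k + L_F + Ls * Dx k" if i: "i < I" for k i
  proof -
    have "y k i = (y k i - (1 / real I) *\<^sub>R (\<Sum>j<I. \<phi> k j *\<^sub>R y k j)) + (1 / real I) *\<^sub>R (\<Sum>j<I. g k j)"
      using cons[of k] by simp
    then have "norm (y k i) \<le> norm (y k i - (1 / real I) *\<^sub>R (\<Sum>j<I. \<phi> k j *\<^sub>R y k j)) + norm ((1 / real I) *\<^sub>R (\<Sum>j<I. g k j))"
      by (metis norm_triangle_ineq)
    also have "\<dots> \<le> Dy k + (L_F + Ls * Dx k)"
    proof (rule add_mono)
      show "norm (y k i - (1 / real I) *\<^sub>R (\<Sum>j<I. \<phi> k j *\<^sub>R y k j)) \<le> Dy k"
        unfolding Dy_def by (rule devb[OF i])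
      have "norm ((1 / real I) *\<^sub>R (\<Sum>j<I. g k j)) = (1 / real I) * norm (\<Sum>j<I. g k j)" by simp
      also have "\<dots> \<le> 1 * norm (\<Sum>j<I. g k j)"
      proof (rule mult_right_mono)
        show "1 / real I \<le> 1" using rI1 by simp
      qed simp
      also have "\<dots> \<le> L_F + Ls * Dx k" using gsum[of k] by simp
      finally show "norm ((1 / real I) *\<^sub>R (\<Sum>j<I. g k j)) \<le> L_F + Ls * Dx k" .
    qed
    finally show ?thesis by simp
  qed
  obtain g0 where g0: "is_subgradient U G (x 0 0) g0"
    using subgrad_exists[OF G_convex O_open] init_x[OF I0] X_sub_O by blast
  have LG0: "0 \<le> L_G" using G_bdd[OF init_x[OF I0] g0] by (metis norm_ge_zero order_trans)
  define Tinv where "Tinv = (\<Sum>i<I. 1 / tau i)"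
  have tinv: "1 / tau i \<le> Tinv" if "i < I" for i
    unfolding Tinv_def using that ft_tau_pos by (intro member_le_sum[where f="\<lambda>i. 1 / tau i"]) (auto intro: less_imp_le)
  have "0 \<le> 1 / tau 0" using ft_tau_pos[OF I0] by simp
  then have Tinv0: "0 \<le> Tinv" using tinv[OF I0] by linarith
  have dlt: "norm (xt k i - x k i) \<le> 4 * (real I * norm (y k i) + L_G) * Tinv" if i: "i < I" for k i
  proof -
    have der: "((\<lambda>z. ft i z (x k i)) has_derivative (\<lambda>h. inner (gradft i (x k i) (x k i)) h)) (at (x k i))"
      by (rule ft_grad[OF i _ xX[OF i]]) (use xX[OF i] X_sub_O in blast)
    have "norm (xt k i - x k i) \<le> 4 * (norm (gradft i (x k i) (x k i) + (real I *\<^sub>R y k i - gradf i (x k i))) + L_G) / tau i"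
      by (rule delta_bound[where ft="\<lambda>z. ft i z (x k i)", OF X_convex xX[OF i] step_xt_mem[OF i] X_sub_O O_open
            G_convex ft_strong[OF i xX[OF i]] ft_tau_pos[OF i] der step_xt_min[OF i] G_bdd[OF xX[OF i]]])
    also have "4 * (norm (gradft i (x k i) (x k i) + (real I *\<^sub>R y k i - gradf i (x k i))) + L_G) / tau i
        = 4 * (real I * norm (y k i) + L_G) * (1 / tau i)"
      using ft_consistent[OF i xX[OF i]] by simp
    also have "\<dots> \<le> 4 * (real I * norm (y k i) + L_G) * Tinv"
      using tinv[OF i] LG0 by (intro mult_left_mono) auto
    finally show ?thesis .
  qed
  define a0 where "a0 = real I * 4 * Tinv * (real I * L_F + L_G)"
  define a1 where "a1 = real I * 4 * Tinv * real I"
  define a2 where "a2 = real I * 4 * Tinv * real I * Ls"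
  have a00: "0 \<le> a0" unfolding a0_def using Tinv0 LF0 LG0 by simp
  have a10: "0 \<le> a1" unfolding a1_def using Tinv0 by simp
  have a20: "0 \<le> a2" unfolding a2_def using Tinv0 Ls0 by simp
  have hm: "M k \<le> a0 + a1 * Dy k + a2 * Dx k" for k
  proof -
    have "M k \<le> (\<Sum>i<I. 4 * (real I * (Dy k + L_F + Ls * Dx k) + L_G) * Tinv)"
      unfolding M_def
    proof (rule sum_mono)
      fix i assume "i \<in> {..<I}"
      then have i: "i < I" by simp
      have "4 * (real I * norm (y k i) + L_G) * Tinv \<le> 4 * (real I * (Dy k + L_F + Ls * Dx k) + L_G) * Tinv"
        using ynorm[OF i] Tinv0 by (intro mult_right_mono mult_left_mono add_mono) auto
      then show "norm (xt k i - x k i) \<le> 4 * (real I * (Dy k + L_F + Ls * Dx k) + L_G) * Tinv"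
        using dlt[OF i, of k] by linarith
    qed
    also have "\<dots> = a0 + a1 * Dy k + a2 * Dx k"
      unfolding a0_def a1_def a2_def by (simp add: algebra_simps)
    finally show ?thesis .
  qed
  have gsq0: "(\<lambda>k. (\<gamma> k)\<^sup>2) \<longlonglongrightarrow> 0" by (rule summable_LIMSEQ_zero[OF gamma_sq])
  then have "(\<lambda>k. sqrt ((\<gamma> k)\<^sup>2)) \<longlonglongrightarrow> sqrt 0" by (rule tendsto_real_sqrt)
  moreover have "(\<lambda>k. sqrt ((\<gamma> k)\<^sup>2)) = \<gamma>" using gamma_pos by (intro ext) (simp add: less_imp_le)
  ultimately have gam0: "\<gamma> \<longlonglongrightarrow> 0" by simp
  define C where "C = 2 / q"
  have C0: "0 \<le> C" unfolding C_def using q0 by simp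
  have rk: "\<rho>^k \<le> 1" for k using r0 r1 by (simp add: power_le_one)
  have hx: "Dx k \<le> C * Dx 0 + C * (\<Sum>t<k. \<rho>^(k - 1 - t) * (\<gamma> t * M t))" for k
  proof -
    have "(\<rho>^k / q) * Dx 0 \<le> C * Dx 0"
      unfolding C_def using rk[of k] q0 Dx0[of 0] by (intro mult_right_mono) (auto simp: divide_right_mono)
    then show ?thesis using Wx[of k] unfolding C_def by linarith
  qed
  have hy: "Dy k \<le> C * Dy 0 + C * cy * (\<Sum>t<k. \<rho>^(k - 1 - t) * (Dx t + \<gamma> t * M t))" for k
  proof -
    have "(\<rho>^k / q) * Dy 0 \<le> C * Dy 0"
      unfolding C_def using rk[of k] q0 Dy0[of 0] by (intro mult_right_mono) (auto simp: divide_right_mono)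
    moreover have "(\<Sum>t<k. \<rho>^(k - 1 - t) * (cy * (Dx t + \<gamma> t * M t))) = cy * (\<Sum>t<k. \<rho>^(k - 1 - t) * (Dx t + \<gamma> t * M t))"
      by (simp add: sum_distrib_left mult_ac)
    then have "(2/q) * (\<Sum>t<k. \<rho>^(k - 1 - t) * (cy * (Dx t + \<gamma> t * M t))) = C * cy * (\<Sum>t<k. \<rho>^(k - 1 - t) * (Dx t + \<gamma> t * M t))"
      unfolding C_def by simp
    ultimately show ?thesis using Wy[of k] by linarith
  qed
  obtain Mb where Mb: "\<And>k. M k \<le> Mb"
    using small_gain[OF less_imp_le[OF r0] r1 C0 cy0 a00 a10 a20 Dx0 Dy0 M0 less_imp_le[OF gamma_pos] gam0 hx hy hm]
    by blast
  have Mb0: "0 \<le> Mb" using Mb[of 0] M0[of 0] by linarith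
  show ?thesis unfolding Let_def
  proof (intro allI impI)
    fix i assume i: "i < I"
    define d where "d k = norm (x k i - (1 / real I) *\<^sub>R (\<Sum>j<I. \<phi> k j *\<^sub>R x k j))" for k
    have dle: "d k \<le> (Dx 0 / q) * \<rho>^k + (2 * Mb / q) * (\<Sum>t<k. \<rho>^(k - 1 - t) * \<gamma> t)" for k
    proof -
      have s1: "d k \<le> Dx k" unfolding d_def using dxb[OF i, of k] unfolding xbar_def .
      have s2: "(\<Sum>t<k. \<rho>^(k - 1 - t) * (\<gamma> t * M t)) \<le> (\<Sum>t<k. \<rho>^(k - 1 - t) * \<gamma> t) * Mb"
        unfolding sum_distrib_right
      proof (rule sum_mono)
        fix t assume "t \<in> {..<k}"
        have "0 \<le> \<rho>^(k - 1 - t) * \<gamma> t" using r0 gamma_pos[of t] by simp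
        then have "(\<rho>^(k - 1 - t) * \<gamma> t) * M t \<le> (\<rho>^(k - 1 - t) * \<gamma> t) * Mb"
          by (rule mult_left_mono[OF Mb[of t]])
        then show "\<rho>^(k - 1 - t) * (\<gamma> t * M t) \<le> \<rho>^(k - 1 - t) * \<gamma> t * Mb"
          by (simp add: mult.assoc)
      qed
      have s3: "(2/q) * (\<Sum>t<k. \<rho>^(k - 1 - t) * (\<gamma> t * M t)) \<le> (2/q) * ((\<Sum>t<k. \<rho>^(k - 1 - t) * \<gamma> t) * Mb)"
        using s2 q0 by (intro mult_left_mono) auto
      have s4: "(\<rho>^k / q) * Dx 0 = (Dx 0 / q) * \<rho>^k" by simp
      have s5: "(2/q) * ((\<Sum>t<k. \<rho>^(k - 1 - t) * \<gamma> t) * Mb) = (2 * Mb / q) * (\<Sum>t<k. \<rho>^(k - 1 - t) * \<gamma> t)" by simp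
      show ?thesis using s1 Wx[of k] s3 s4 s5 by linarith
    qed
    have "(d \<longlonglongrightarrow> 0) \<and> summable (\<lambda>k. \<gamma> k * d k) \<and> summable (\<lambda>k. (d k)\<^sup>2)"
      by (rule seq_main[OF less_imp_le[OF r0] r1 _ _ less_imp_le[OF gamma_pos] gamma_sq _ dle])
        (use Dx0 q0 Mb0 d_def in auto)
    then show "(\<lambda>k. norm (x k i - (1 / real I) *\<^sub>R (\<Sum>j<I. \<phi> k j *\<^sub>R x k j))) \<longlonglongrightarrow> 0 \<and>
      summable (\<lambda>k. \<gamma> k * norm (x k i - (1 / real I) *\<^sub>R (\<Sum>j<I. \<phi> k j *\<^sub>R x k j))) \<and>
      summable (\<lambda>k. (norm (x k i - (1 / real I) *\<^sub>R (\<Sum>j<I. \<phi> k j *\<^sub>R x k j)))\<^sup>2)"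
      unfolding d_def by simp
  qed
qed


end
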